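(* For $p\in(0,\infty)$ and $w\in\mathbb{R}$ let $f_p(w)=\int_0^{\infty}x^{p-1}e^{-x^2}\sin(wx)\,\mathrm{d}x$. If $p\in(2k,2k+2]$ for some $k\in\{0,1,2,\dots\}$, then $f_p$ has $k$ roots on $(0,\infty)$. *)

theory Defs
  imports "HOL-Analysis.Analysis"
begin

text \<open>f_p(w) = integral over (0,infinity) of x^(p-1) e^(-x^2) sin(w x) dx
  (Henstock-Kurzweil integral; the integrand is absolutely integrable for p > 0).\<close>
definition fp :: "real \<Rightarrow> real \<Rightarrow> real" where
  "fp p w = integral {0<..} (\<lambda>x. x powr (p - 1) * exp (- (x\<^sup>2)) * sin (w * x))"

end

theory Submission
  imports Defs "HOL-Real_Asymp.Real_Asymp"
begin

lemma gamma_majorant_int: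
  assumes s: "s > 0"
  shows "set_integrable lborel {0<..} (\<lambda>x::real. x powr (s-1) / exp x)"
proof -
  have "integrable lborel (\<lambda>x::real. indicator {0..} x * (x powr (s-1) / exp x))"
  proof (rule integrableI_nonneg)
    show "(\<lambda>x::real. indicator {0..} x * (x powr (s-1) / exp x)) \<in> borel_measurable lborel"
      by measurable
    show "AE x in lborel. 0 \<le> indicator {0..} x * (x powr (s-1) / exp (x::real))"
      by (auto simp: indicator_def)
    have "(\<integral>\<^sup>+x. ennreal (indicator {0..} x * (x powr (s-1) / exp x)) \<partial>lborel) = ennreal (Gamma s)"
      using Gamma_conv_nn_integral_real[OF s] by (simp add: mult.assoc)
    then show "(\<integral>\<^sup>+x. ennreal (indicator {0..} x * (x powr (s-1) / exp x)) \<partial>lborel) < \<infinity>"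
      by simp
  qed
  then have "set_integrable lborel {0..} (\<lambda>x::real. x powr (s-1) / exp x)"
    by (simp add: set_integrable_def)
  then show ?thesis
    by (rule set_integrable_subset) auto
qed

lemma integrable_gen:
  assumes s: "s > 0" and hm: "h \<in> borel_measurable lborel" and hb: "\<And>x. \<bar>h x\<bar> \<le> 1"
  shows "set_integrable lborel {0<..} (\<lambda>x::real. x powr (s-1) * exp (-(x\<^sup>2)) * h x)"
proof (rule set_integrable_bound[OF set_integrable_mult_right[OF gamma_majorant_int[OF s], of "exp (1/4)"]])
  show "set_borel_measurable lborel {0<..} (\<lambda>x::real. x powr (s-1) * exp (-(x\<^sup>2)) * h x)"
    unfolding set_borel_measurable_def using hm by measurable
  show "AE x in lborel. x \<in> {0<..} \<longrightarrow> norm (x powr (s-1) * exp (-(x\<^sup>2)) * h x) \<le> norm (exp (1/4) * (x powr (s-1) / exp x))"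
  proof (intro AE_I2 impI)
    fix x :: real assume "x \<in> {0<..}"
    have e: "exp (-(x\<^sup>2)) \<le> exp (1/4) / exp x"
    proof -
      have "-(x\<^sup>2) \<le> 1/4 - x" using sum_squares_ge_zero[of "x - 1/2" 0]
        by (simp add: power2_eq_square algebra_simps)
      then have "exp (-(x\<^sup>2)) \<le> exp (1/4 - x)" by simp
      then show ?thesis by (simp add: exp_diff)
    qed
    have p: "0 \<le> x powr (s-1)" by simp
    have "norm (x powr (s-1) * exp (-(x\<^sup>2)) * h x) = x powr (s-1) * exp (-(x\<^sup>2)) * \<bar>h x\<bar>"
      by (simp add: abs_mult)
    also have "\<dots> \<le> x powr (s-1) * exp (-(x\<^sup>2)) * 1"
      by (intro mult_left_mono hb) simp
    also have "\<dots> \<le> x powr (s-1) * (exp (1/4) / exp x)"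
      using mult_left_mono[OF e p] by simp
    also have "\<dots> = norm (exp (1/4) * (x powr (s-1) / exp x))" by simp
    finally show "norm (x powr (s-1) * exp (-(x\<^sup>2)) * h x) \<le> norm (exp (1/4) * (x powr (s-1) / exp x))" .
  qed
qed

lemma lip_cos: "\<bar>cos (u::real) - cos v\<bar> \<le> \<bar>u - v\<bar>"
proof -
  have "\<bar>cos u - cos v\<bar> = 2 * \<bar>sin ((u + v) / 2)\<bar> * \<bar>sin ((v - u) / 2)\<bar>"
    by (simp add: cos_diff_cos abs_mult)
  also have "\<dots> \<le> 2 * 1 * \<bar>(v - u) / 2\<bar>"
    by (intro mult_mono abs_sin_x_le_abs_x) auto
  finally show ?thesis by simp
qed

lemma lip_sin: "\<bar>sin (u::real) - sin v\<bar> \<le> \<bar>u - v\<bar>"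
proof -
  have "\<bar>sin u - sin v\<bar> = 2 * \<bar>sin ((u - v) / 2)\<bar> * \<bar>cos ((u + v) / 2)\<bar>"
    by (simp add: sin_diff_sin abs_mult)
  also have "\<dots> \<le> 2 * \<bar>(u - v) / 2\<bar> * 1"
    by (intro mult_mono abs_sin_x_le_abs_x) auto
  finally show ?thesis by simp
qed

lemma taylor_gen:
  fixes \<phi> \<psi> :: "real \<Rightarrow> real"
  assumes d: "\<And>t. (\<phi> has_real_derivative \<psi> t) (at t)"
    and l: "\<And>u v. \<bar>\<psi> u - \<psi> v\<bar> \<le> \<bar>u - v\<bar>"
  shows "\<bar>\<phi> (a + b) - \<phi> a - b * \<psi> a\<bar> \<le> b\<^sup>2"
proof -
  define F where "F t = \<phi> (a + t) - t * \<psi> a" for t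
  have dF: "(F has_real_derivative (\<psi> (a + t) - \<psi> a)) (at t)" for t
    unfolding F_def
    by (rule derivative_eq_intros DERIV_chain2[OF d] | simp)+
  have key: "\<bar>F b - F 0\<bar> \<le> b\<^sup>2"
  proof (cases "b = 0")
    case True then show ?thesis by simp
  next
    case False
    show ?thesis
    proof (cases "b > 0")
      case True
      obtain z where z: "0 < z" "z < b" "F b - F 0 = (b - 0) * (\<psi> (a + z) - \<psi> a)"
        using MVT2[OF True, of F "\<lambda>t. \<psi> (a + t) - \<psi> a"] dF by blast
      have "\<bar>F b - F 0\<bar> = b * \<bar>\<psi> (a + z) - \<psi> a\<bar>" using z True by (simp add: abs_mult)
      also have "\<dots> \<le> b * b" using l[of "a + z" a] z True by (intro mult_left_mono) auto
      finally show ?thesis by (simp add: power2_eq_square)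
    next
      case False
      with \<open>b \<noteq> 0\<close> have bn: "b < 0" by simp
      obtain z where z: "b < z" "z < 0" "F 0 - F b = (0 - b) * (\<psi> (a + z) - \<psi> a)"
        using MVT2[OF bn, of F "\<lambda>t. \<psi> (a + t) - \<psi> a"] dF by blast
      have "\<bar>F b - F 0\<bar> = (-b) * \<bar>\<psi> (a + z) - \<psi> a\<bar>" using z bn
        by (simp add: abs_mult abs_minus_commute)
      also have "\<dots> \<le> (-b) * (-b)" using l[of "a + z" a] z bn by (intro mult_left_mono) auto
      finally show ?thesis by (simp add: power2_eq_square)
    qed
  qed
  then show ?thesis by (simp add: F_def)
qed

lemma taylor_sin: "\<bar>sin ((a::real) + b) - sin a - b * cos a\<bar> \<le> b\<^sup>2"
  by (rule taylor_gen[where \<phi>=sin and \<psi>=cos]) (auto intro: DERIV_sin lip_cos)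

lemma taylor_cos: "\<bar>cos ((a::real) + b) - cos a - b * (- sin a)\<bar> \<le> b\<^sup>2"
proof (rule taylor_gen[where \<phi>=cos and \<psi>="\<lambda>t. - sin t"])
  show "(cos has_real_derivative - sin t) (at t)" for t by (rule DERIV_cos)
  show "\<bar>- sin u - - sin v\<bar> \<le> \<bar>u - v\<bar>" for u v :: real using lip_sin[of v u] by (simp add: abs_minus_commute)
qed

lemma taylor_cos': "\<bar>cos ((a::real) + b) - cos a + b * sin a\<bar> \<le> b\<^sup>2"
  using taylor_cos[of a b] by simp

lemma deriv_integral:
  fixes g \<phi> \<psi> :: "real \<Rightarrow> real" and S :: "real set"
  assumes i1: "\<And>w. (\<lambda>x. g x * \<phi> (w * x)) integrable_on S"
    and i2: "\<And>w. (\<lambda>x. g x * x * \<psi> (w * x)) integrable_on S"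
    and i3: "(\<lambda>x. g x * x\<^sup>2) integrable_on S"
    and gpos: "\<And>x. x \<in> S \<Longrightarrow> 0 \<le> g x"
    and tay: "\<And>a b. \<bar>\<phi> (a + b) - \<phi> a - b * \<psi> a\<bar> \<le> b\<^sup>2"
  shows "((\<lambda>w. integral S (\<lambda>x. g x * \<phi> (w * x))) has_real_derivative
            integral S (\<lambda>x. g x * x * \<psi> (w * x))) (at w)"
proof -
  let ?F = "\<lambda>w. integral S (\<lambda>x. g x * \<phi> (w * x))"
  let ?D = "integral S (\<lambda>x. g x * x * \<psi> (w * x))"
  let ?I = "integral S (\<lambda>x. g x * x\<^sup>2)"
  have bound: "norm ((?F y - ?F w) / (y - w) - ?D) \<le> \<bar>y - w\<bar> * ?I" if yw: "y \<noteq> w" for y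
  proof -
    let ?h = "\<lambda>x. (g x * \<phi> (y * x) - g x * \<phi> (w * x)) / (y - w) - g x * x * \<psi> (w * x)"
    have ih: "?h integrable_on S"
      by (intro integrable_diff integrable_on_mult_left[where f="\<lambda>x. _ - _", unfolded divide_inverse[symmetric]] i1 i2 )
         (auto simp: divide_inverse intro!: integrable_on_mult_left integrable_diff i1)
    have eq: "(?F y - ?F w) / (y - w) - ?D = integral S ?h"
      by (simp add: integral_diff i1 i2 integrable_diff integrable_on_mult_left divide_inverse
            integrable_on_mult_right)
    have pt: "norm (?h x) \<le> \<bar>y - w\<bar> * (g x * x\<^sup>2)" if "x \<in> S" for x
    proof -
      have "?h x = g x * (\<phi> (w * x + (y - w) * x) - \<phi> (w * x) - ((y - w) * x) * \<psi> (w * x)) / (y - w)"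
        using yw by (simp add: field_simps)
      also have "norm \<dots> = g x * \<bar>\<phi> (w * x + (y - w) * x) - \<phi> (w * x) - ((y - w) * x) * \<psi> (w * x)\<bar> / \<bar>y - w\<bar>"
        using gpos[OF that] by (simp add: abs_mult)
      also have "\<dots> \<le> g x * ((y - w) * x)\<^sup>2 / \<bar>y - w\<bar>"
        using gpos[OF that] by (intro divide_right_mono mult_left_mono tay) auto
      also have "\<dots> = \<bar>y - w\<bar> * (g x * x\<^sup>2)"
        using yw by (simp add: power2_eq_square field_simps abs_mult_self_eq)
      finally show ?thesis .
    qed
    have "norm (integral S ?h) \<le> integral S (\<lambda>x. \<bar>y - w\<bar> * (g x * x\<^sup>2))"
      by (rule integral_norm_bound_integral[OF ih integrable_on_mult_right[OF i3] pt])
    then show ?thesis using eq by simp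
  qed
  have "((\<lambda>y. (?F y - ?F w) / (y - w) - ?D) \<longlongrightarrow> 0) (at w)"
  proof (rule Lim_null_comparison)
    show "\<forall>\<^sub>F y in at w. norm ((?F y - ?F w) / (y - w) - ?D) \<le> \<bar>y - w\<bar> * ?I"
      using bound by (auto simp: eventually_at_filter)
    have "((\<lambda>y. \<bar>y - w\<bar> * ?I) \<longlongrightarrow> \<bar>w - w\<bar> * ?I) (at w)"
      by (intro tendsto_intros)
    then show "((\<lambda>y. \<bar>y - w\<bar> * ?I) \<longlongrightarrow> 0) (at w)" by simp
  qed
  then show ?thesis
    by (simp add: has_field_derivative_iff LIM_zero_iff)
qed

definition Cf :: "real \<Rightarrow> real \<Rightarrow> real" where
  "Cf q w = integral {0<..} (\<lambda>x. x powr (q - 1) * exp (- (x\<^sup>2)) * cos (w * x))"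

definition Mf :: "real \<Rightarrow> real" where
  "Mf q = integral {0<..} (\<lambda>x. x powr (q - 1) * exp (- (x\<^sup>2)))"

lemma setint_sin: "s > 0 \<Longrightarrow> set_integrable lborel {0<..} (\<lambda>x::real. x powr (s-1) * exp (-(x\<^sup>2)) * sin (w * x))"
  by (rule integrable_gen) (auto simp: abs_sin_le_one)

lemma setint_cos: "s > 0 \<Longrightarrow> set_integrable lborel {0<..} (\<lambda>x::real. x powr (s-1) * exp (-(x\<^sup>2)) * cos (w * x))"
  by (rule integrable_gen) (auto simp: abs_cos_le_one)

lemma setint_one: "s > 0 \<Longrightarrow> set_integrable lborel {0<..} (\<lambda>x::real. x powr (s-1) * exp (-(x\<^sup>2)))"
  using integrable_gen[of s "\<lambda>x. 1"] by simp

lemma int_sin: "s > 0 \<Longrightarrow> (\<lambda>x::real. x powr (s-1) * exp (-(x\<^sup>2)) * sin (w * x)) integrable_on {0<..}"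
  using set_borel_integral_eq_integral(1)[OF setint_sin] .

lemma int_cos: "s > 0 \<Longrightarrow> (\<lambda>x::real. x powr (s-1) * exp (-(x\<^sup>2)) * cos (w * x)) integrable_on {0<..}"
  using set_borel_integral_eq_integral(1)[OF setint_cos] .

lemma int_one: "s > 0 \<Longrightarrow> (\<lambda>x::real. x powr (s-1) * exp (-(x\<^sup>2))) integrable_on {0<..}"
  using set_borel_integral_eq_integral(1)[OF setint_one] .

lemma fp_bound: assumes "s > 0" shows "\<bar>fp s w\<bar> \<le> Mf s"
proof -
  have "norm (fp s w) \<le> Mf s" unfolding fp_def Mf_def
    by (rule integral_norm_bound_integral[OF int_sin[OF assms] int_one[OF assms]])
       (auto simp: abs_mult intro!: mult_left_mono[where b=1, simplified] abs_sin_le_one)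
  then show ?thesis by simp
qed

lemma Cf_bound: assumes "s > 0" shows "\<bar>Cf s w\<bar> \<le> Mf s"
proof -
  have "norm (Cf s w) \<le> Mf s" unfolding Cf_def Mf_def
    by (rule integral_norm_bound_integral[OF int_cos[OF assms] int_one[OF assms]])
       (auto simp: abs_mult intro!: mult_left_mono[where b=1, simplified] abs_cos_le_one)
  then show ?thesis by simp
qed

lemma powr_x1: "x > 0 \<Longrightarrow> (x::real) powr (s - 1) * x = x powr (s + 1 - 1)"
  using powr_mult_base[of x "s - 1"] by (simp add: mult.commute)

lemma powr_x2: "x > 0 \<Longrightarrow> (x::real) powr (s - 1) * x\<^sup>2 = x powr (s + 2 - 1)"
proof -
  assume x: "x > 0"
  have "x powr (s - 1) * x\<^sup>2 = (x powr (s - 1) * x) * x" by (simp add: power2_eq_square)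
  also have "\<dots> = x powr (s + 1 - 1) * x" using powr_x1[OF x] by simp
  also have "\<dots> = x powr (s + 1 + 1 - 1)" using powr_x1[OF x, of "s+1"] by simp
  finally show ?thesis by simp
qed

lemma powr_x1': "x > 0 \<Longrightarrow> (x::real) * x powr (s - 1) = x powr s"
  using powr_x1[of x s] by (simp add: mult.commute)

lemma powr_x2': "x > 0 \<Longrightarrow> (x::real)\<^sup>2 * x powr (s - 1) = x powr (s + 1)"
  using powr_x2[of x s] by (simp add: mult.commute add.commute)

lemma fp_deriv:
  assumes s: "s > 0"
  shows "(fp s has_real_derivative Cf (s + 1) w) (at w)"
proof -
  let ?g = "\<lambda>x::real. x powr (s-1) * exp (-(x\<^sup>2))"
  have s1: "s + 1 > 0" "s + 2 > 0" using s by auto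
  have i2: "(\<lambda>x. ?g x * x * cos (w' * x)) integrable_on {0<..}" for w'
    by (rule integrable_eq[OF int_cos[OF s1(1), of w']]) (auto simp: powr_x1' algebra_simps)
  have i3: "(\<lambda>x. ?g x * x\<^sup>2) integrable_on {0<..}"
    by (rule integrable_eq[OF int_one[OF s1(2)]]) (auto simp: powr_x2' algebra_simps)
  have "((\<lambda>w. integral {0<..} (\<lambda>x. ?g x * sin (w * x))) has_real_derivative
            integral {0<..} (\<lambda>x. ?g x * x * cos (w * x))) (at w)"
    by (rule deriv_integral[OF int_sin[OF s] i2 i3]) (auto intro: taylor_sin)
  moreover have "integral {0<..} (\<lambda>x. ?g x * x * cos (w * x)) = Cf (s + 1) w"
    unfolding Cf_def by (rule integral_cong) (auto simp: powr_x1' algebra_simps)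
  ultimately show ?thesis unfolding fp_def[abs_def] by simp
qed

lemma Cf_deriv:
  assumes s: "s > 0"
  shows "(Cf s has_real_derivative - fp (s + 1) w) (at w)"
proof -
  let ?g = "\<lambda>x::real. x powr (s-1) * exp (-(x\<^sup>2))"
  have s1: "s + 1 > 0" "s + 2 > 0" using s by auto
  have i2: "(\<lambda>x. ?g x * x * (- sin (w' * x))) integrable_on {0<..}" for w'
    by (rule integrable_eq[OF integrable_neg[OF int_sin[OF s1(1), of w']]]) (auto simp: powr_x1' algebra_simps)
  have i3: "(\<lambda>x. ?g x * x\<^sup>2) integrable_on {0<..}"
    by (rule integrable_eq[OF int_one[OF s1(2)]]) (auto simp: powr_x2' algebra_simps)
  have "((\<lambda>w. integral {0<..} (\<lambda>x. ?g x * cos (w * x))) has_real_derivative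
            integral {0<..} (\<lambda>x. ?g x * x * (- sin (w * x)))) (at w)"
    by (rule deriv_integral[where \<phi>=cos and \<psi>="\<lambda>t. - sin t", OF int_cos[OF s] i2 i3]) (auto intro: taylor_cos')
  moreover have "integral {0<..} (\<lambda>x. ?g x * x * (- sin (w * x))) = - fp (s + 1) w"
  proof -
    have "integral {0<..} (\<lambda>x. ?g x * x * (- sin (w * x))) = integral {0<..} (\<lambda>x. - (x powr (s + 1 - 1) * exp (-(x\<^sup>2)) * sin (w * x)))"
      by (rule integral_cong) (auto simp: powr_x1' algebra_simps)
    then show ?thesis unfolding fp_def by simp
  qed
  ultimately show ?thesis unfolding Cf_def[abs_def] by simp
qed

lemma ftc_half:
  fixes f F :: "real \<Rightarrow> real"
  assumes fi: "set_integrable lborel {0<..} f"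
    and d: "\<And>x. x > 0 \<Longrightarrow> (F has_real_derivative f x) (at x)"
    and c: "\<And>x. x > 0 \<Longrightarrow> isCont f x"
    and l0: "(F \<longlongrightarrow> 0) (at_right 0)"
    and li: "(F \<longlongrightarrow> 0) at_top"
  shows "integral {0<..} f = 0"
proof -
  have "(LBINT x=ereal 0..\<infinity>. f x) = 0 - 0"
  proof (rule interval_integral_FTC_integrable[where F=F])
    show "ereal 0 < \<infinity>" by simp
    show "(F has_vector_derivative f x) (at x)" if "ereal 0 < ereal x" "ereal x < \<infinity>" for x
      using d[of x] that by (simp add: has_real_derivative_iff_has_vector_derivative)
    show "isCont f x" if "ereal 0 < ereal x" "ereal x < \<infinity>" for x using c[of x] that by simp
    show "set_integrable lborel (einterval (ereal 0) \<infinity>) f" using fi by simp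
    show "((F \<circ> real_of_ereal) \<longlongrightarrow> 0) (at_right (ereal 0))"
      using l0 by (simp add: ereal_tendsto_simps1)
    show "((F \<circ> real_of_ereal) \<longlongrightarrow> 0) (at_left \<infinity>)"
      using li by (simp add: ereal_tendsto_simps1)
  qed
  then have "(LINT x:{0<..}|lborel. f x) = 0"
    using interval_lebesgue_integral_0_infty(2)[of lborel f] by (simp add: zero_ereal_def)
  then show ?thesis using set_borel_integral_eq_integral(2)[OF fi] by simp
qed

lemma lim_top_aux:
  fixes h :: "real \<Rightarrow> real"
  assumes "\<And>x. \<bar>h x\<bar> \<le> 1"
  shows "((\<lambda>x. x powr r * exp (-(x\<^sup>2)) * h x) \<longlongrightarrow> 0) at_top"
proof (rule Lim_null_comparison)
  show "((\<lambda>x::real. x powr r * exp (-(x\<^sup>2))) \<longlongrightarrow> 0) at_top" by real_asymp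
  show "\<forall>\<^sub>F x in at_top. norm (x powr r * exp (-(x\<^sup>2)) * h x) \<le> x powr r * exp (-(x\<^sup>2))"
  proof (intro always_eventually allI)
    fix x :: real
    have "x powr r * exp (-(x\<^sup>2)) * \<bar>h x\<bar> \<le> x powr r * exp (-(x\<^sup>2)) * 1"
      by (rule mult_left_mono) (use assms in auto)
    then show "norm (x powr r * exp (-(x\<^sup>2)) * h x) \<le> x powr r * exp (-(x\<^sup>2))"
      by (simp add: abs_mult)
  qed
qed

lemma parts_sin:
  assumes s: "s > 1"
  shows "(s - 1) * fp (s - 1) w - 2 * fp (s + 1) w + w * Cf s w = 0"
proof -
  let ?g1 = "\<lambda>x::real. x powr (s - 1 - 1) * exp (-(x\<^sup>2)) * sin (w * x)"
  let ?g2 = "\<lambda>x::real. x powr (s + 1 - 1) * exp (-(x\<^sup>2)) * sin (w * x)"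
  let ?g3 = "\<lambda>x::real. x powr (s - 1) * exp (-(x\<^sup>2)) * cos (w * x)"
  let ?f = "\<lambda>x. (s - 1) * ?g1 x - 2 * ?g2 x + w * ?g3 x"
  have p: "s - 1 > 0" "s + 1 > 0" "s > 0" using s by auto
  have "integral {0<..} ?f = 0"
  proof (rule ftc_half[where F="\<lambda>x. x powr (s - 1) * exp (-(x\<^sup>2)) * sin (w * x)"])
    show "set_integrable lborel {0<..} ?f"
      by (intro set_integral_add set_integral_diff set_integrable_mult_right setint_sin setint_cos p)
    show "((\<lambda>x. x powr (s - 1) * exp (-(x\<^sup>2)) * sin (w * x)) has_real_derivative ?f x) (at x)"
      if x: "x > 0" for x
    proof -
      have "((\<lambda>x. x powr (s - 1) * exp (-(x\<^sup>2)) * sin (w * x)) has_real_derivative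
        (s - 1) * x powr (s - 1 - 1) * exp (-(x\<^sup>2)) * sin (w * x) + x powr (s - 1) * (exp (-(x\<^sup>2)) * (-(2 * x))) * sin (w * x)
         + x powr (s - 1) * exp (-(x\<^sup>2)) * (cos (w * x) * w)) (at x)"
        using x by (auto intro!: derivative_eq_intros simp: algebra_simps)
      moreover have "(s - 1) * x powr (s - 1 - 1) * exp (-(x\<^sup>2)) * sin (w * x) + x powr (s - 1) * (exp (-(x\<^sup>2)) * (-(2 * x))) * sin (w * x)
         + x powr (s - 1) * exp (-(x\<^sup>2)) * (cos (w * x) * w) = ?f x"
        by (simp add: algebra_simps) (use powr_x1'[OF x, of s] in simp)
      ultimately show ?thesis by (rule DERIV_cong)
    qed
    show "isCont ?f x" if "x > 0" for x using that by (intro continuous_intros) auto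
    have "((\<lambda>x::real. x powr (s - 1)) \<longlongrightarrow> 0) (at_right 0)" using p by real_asymp
    then have "((\<lambda>x. x powr (s - 1) * exp (-(x\<^sup>2)) * sin (w * x)) \<longlongrightarrow> 0 * exp (-(0\<^sup>2)) * sin (w * 0)) (at_right 0)"
      by (intro tendsto_mult tendsto_intros)
    then show "((\<lambda>x. x powr (s - 1) * exp (-(x\<^sup>2)) * sin (w * x)) \<longlongrightarrow> 0) (at_right 0)"
      by simp
    show "((\<lambda>x. x powr (s - 1) * exp (-(x\<^sup>2)) * sin (w * x)) \<longlongrightarrow> 0) at_top"
      by (rule lim_top_aux) (simp add: abs_sin_le_one)
  qed
  moreover have "integral {0<..} ?f = (s - 1) * fp (s - 1) w - 2 * fp (s + 1) w + w * Cf s w"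
  proof -
    have i1: "?g1 integrable_on {0<..}" by (rule int_sin[OF p(1)])
    have i2: "?g2 integrable_on {0<..}" by (rule int_sin[OF p(2)])
    have i3: "?g3 integrable_on {0<..}" by (rule int_cos[OF p(3)])
    have "integral {0<..} ?f = integral {0<..} (\<lambda>x. (s - 1) * ?g1 x - 2 * ?g2 x) + integral {0<..} (\<lambda>x. w * ?g3 x)"
      by (rule integral_add) (intro integrable_diff integrable_on_mult_right i1 i2 i3)+
    also have "integral {0<..} (\<lambda>x. (s - 1) * ?g1 x - 2 * ?g2 x) = integral {0<..} (\<lambda>x. (s - 1) * ?g1 x) - integral {0<..} (\<lambda>x. 2 * ?g2 x)"
      by (rule integral_diff) (intro integrable_on_mult_right i1 i2)+
    finally show ?thesis unfolding fp_def Cf_def integral_mult_right by simp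
  qed
  ultimately show ?thesis by simp
qed

lemma parts_cos:
  assumes s: "s > 1"
  shows "(s - 1) * Cf (s - 1) w - 2 * Cf (s + 1) w - w * fp s w = 0"
proof -
  let ?g1 = "\<lambda>x::real. x powr (s - 1 - 1) * exp (-(x\<^sup>2)) * cos (w * x)"
  let ?g2 = "\<lambda>x::real. x powr (s + 1 - 1) * exp (-(x\<^sup>2)) * cos (w * x)"
  let ?g3 = "\<lambda>x::real. x powr (s - 1) * exp (-(x\<^sup>2)) * sin (w * x)"
  let ?f = "\<lambda>x. (s - 1) * ?g1 x - 2 * ?g2 x - w * ?g3 x"
  have p: "s - 1 > 0" "s + 1 > 0" "s > 0" using s by auto
  have "integral {0<..} ?f = 0"
  proof (rule ftc_half[where F="\<lambda>x. x powr (s - 1) * exp (-(x\<^sup>2)) * cos (w * x)"])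
    show "set_integrable lborel {0<..} ?f"
      by (intro set_integral_add set_integral_diff set_integrable_mult_right setint_sin setint_cos p)
    show "((\<lambda>x. x powr (s - 1) * exp (-(x\<^sup>2)) * cos (w * x)) has_real_derivative ?f x) (at x)"
      if x: "x > 0" for x
    proof -
      have "((\<lambda>x. x powr (s - 1) * exp (-(x\<^sup>2)) * cos (w * x)) has_real_derivative
        (s - 1) * x powr (s - 1 - 1) * exp (-(x\<^sup>2)) * cos (w * x) + x powr (s - 1) * (exp (-(x\<^sup>2)) * (-(2 * x))) * cos (w * x)
         + x powr (s - 1) * exp (-(x\<^sup>2)) * (- sin (w * x) * w)) (at x)"
        using x by (auto intro!: derivative_eq_intros simp: algebra_simps)
      moreover have "(s - 1) * x powr (s - 1 - 1) * exp (-(x\<^sup>2)) * cos (w * x) + x powr (s - 1) * (exp (-(x\<^sup>2)) * (-(2 * x))) * cos (w * x)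
         + x powr (s - 1) * exp (-(x\<^sup>2)) * (- sin (w * x) * w) = ?f x"
        by (simp add: algebra_simps) (use powr_x1'[OF x, of s] in \<open>simp add: algebra_simps\<close>)
      ultimately show ?thesis by (rule DERIV_cong)
    qed
    show "isCont ?f x" if "x > 0" for x using that by (intro continuous_intros) auto
    have "((\<lambda>x::real. x powr (s - 1)) \<longlongrightarrow> 0) (at_right 0)" using p by real_asymp
    then have "((\<lambda>x. x powr (s - 1) * exp (-(x\<^sup>2)) * cos (w * x)) \<longlongrightarrow> 0 * exp (-(0\<^sup>2)) * cos (w * 0)) (at_right 0)"
      by (intro tendsto_mult tendsto_intros)
    then show "((\<lambda>x. x powr (s - 1) * exp (-(x\<^sup>2)) * cos (w * x)) \<longlongrightarrow> 0) (at_right 0)"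
      by simp
    show "((\<lambda>x. x powr (s - 1) * exp (-(x\<^sup>2)) * cos (w * x)) \<longlongrightarrow> 0) at_top"
      by (rule lim_top_aux) (simp add: abs_cos_le_one)
  qed
  moreover have "integral {0<..} ?f = (s - 1) * Cf (s - 1) w - 2 * Cf (s + 1) w - w * fp s w"
  proof -
    have i1: "?g1 integrable_on {0<..}" by (rule int_cos[OF p(1)])
    have i2: "?g2 integrable_on {0<..}" by (rule int_cos[OF p(2)])
    have i3: "?g3 integrable_on {0<..}" by (rule int_sin[OF p(3)])
    have "integral {0<..} ?f = integral {0<..} (\<lambda>x. (s - 1) * ?g1 x - 2 * ?g2 x) - integral {0<..} (\<lambda>x. w * ?g3 x)"
      by (rule integral_diff) (intro integrable_diff integrable_on_mult_right i1 i2 i3)+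
    also have "integral {0<..} (\<lambda>x. (s - 1) * ?g1 x - 2 * ?g2 x) = integral {0<..} (\<lambda>x. (s - 1) * ?g1 x) - integral {0<..} (\<lambda>x. 2 * ?g2 x)"
      by (rule integral_diff) (intro integrable_on_mult_right i1 i2)+
    finally show ?thesis unfolding fp_def Cf_def integral_mult_right by simp
  qed
  ultimately show ?thesis by simp
qed


lemma parts_sin1: "w * Cf 1 w - 2 * fp 2 w = 0"
proof -
  let ?g2 = "\<lambda>x::real. x powr (2 - 1) * exp (-(x\<^sup>2)) * sin (w * x)"
  let ?g3 = "\<lambda>x::real. x powr (1 - 1) * exp (-(x\<^sup>2)) * cos (w * x)"
  let ?f = "\<lambda>x. w * ?g3 x - 2 * ?g2 x"
  have "integral {0<..} ?f = 0"
  proof (rule ftc_half[where F="\<lambda>x. exp (-(x\<^sup>2)) * sin (w * x)"])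
    show "set_integrable lborel {0<..} ?f"
      by (intro set_integral_diff set_integrable_mult_right setint_sin setint_cos) auto
    show "((\<lambda>x. exp (-(x\<^sup>2)) * sin (w * x)) has_real_derivative ?f x) (at x)"
      if x: "x > 0" for x
    proof -
      have "((\<lambda>x. exp (-(x\<^sup>2)) * sin (w * x)) has_real_derivative
         (exp (-(x\<^sup>2)) * (-(2 * x))) * sin (w * x) + exp (-(x\<^sup>2)) * (cos (w * x) * w)) (at x)"
        by (auto intro!: derivative_eq_intros simp: algebra_simps)
      moreover have "(exp (-(x\<^sup>2)) * (-(2 * x))) * sin (w * x) + exp (-(x\<^sup>2)) * (cos (w * x) * w) = ?f x"
        using x by (simp add: algebra_simps)
      ultimately show ?thesis by (rule DERIV_cong)
    qed
    show "isCont ?f x" if "x > 0" for x using that by (intro continuous_intros) auto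
    have "((\<lambda>x. exp (-(x\<^sup>2)) * sin (w * x)) \<longlongrightarrow> exp (-(0\<^sup>2)) * sin (w * 0)) (at_right 0)"
      by (intro tendsto_intros)
    then show "((\<lambda>x. exp (-(x\<^sup>2)) * sin (w * x)) \<longlongrightarrow> 0) (at_right 0)"
      by simp
    have "((\<lambda>x. x powr 0 * exp (-(x\<^sup>2)) * sin (w * x)) \<longlongrightarrow> 0) at_top"
      by (rule lim_top_aux) (simp add: abs_sin_le_one)
    then show "((\<lambda>x. exp (-(x\<^sup>2)) * sin (w * x)) \<longlongrightarrow> 0) at_top"
    proof (rule Lim_transform_eventually)
      show "\<forall>\<^sub>F x in at_top. x powr 0 * exp (-(x\<^sup>2)) * sin (w * x) = exp (-(x\<^sup>2)) * sin (w * x)"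
        using eventually_gt_at_top[of 0] by eventually_elim simp
    qed
  qed
  moreover have "integral {0<..} ?f = w * Cf 1 w - 2 * fp 2 w"
  proof -
    have i2: "?g2 integrable_on {0<..}" by (rule int_sin) simp
    have i3: "?g3 integrable_on {0<..}" by (rule int_cos) simp
    have "integral {0<..} ?f = integral {0<..} (\<lambda>x. w * ?g3 x) - integral {0<..} (\<lambda>x. 2 * ?g2 x)"
      by (rule integral_diff) (intro integrable_on_mult_right i2 i3)+
    then show ?thesis unfolding fp_def Cf_def integral_mult_right by simp
  qed
  ultimately show ?thesis by simp
qed


definition sol :: "real \<Rightarrow> (real \<Rightarrow> real) \<Rightarrow> (real \<Rightarrow> real) \<Rightarrow> bool" where
  "sol p y d \<longleftrightarrow> (\<forall>w. (y has_real_derivative d w) (at w) \<and>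
                       (d has_real_derivative (- (w * d w + p * y w) / 2)) (at w))"

lemma sol_neg: "sol p y d \<Longrightarrow> sol p (\<lambda>w. - y w) (\<lambda>w. - d w)"
  unfolding sol_def
proof (intro allI conjI)
  fix w assume a: "\<forall>w. (y has_real_derivative d w) (at w) \<and> (d has_real_derivative - (w * d w + p * y w) / 2) (at w)"
  show "((\<lambda>w. - y w) has_real_derivative - d w) (at w)" using a DERIV_minus by blast
  have "((\<lambda>w. - d w) has_real_derivative - (- (w * d w + p * y w) / 2)) (at w)" using a DERIV_minus by blast
  then show "((\<lambda>w. - d w) has_real_derivative - (w * - d w + p * - y w) / 2) (at w)"
    by (rule DERIV_cong) (simp add: field_simps)
qed

lemma sol_cont: "sol p y d \<Longrightarrow> continuous_on A y"
  unfolding sol_def by (meson DERIV_isCont continuous_at_imp_continuous_on)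

lemma sol_isCont: "sol p y d \<Longrightarrow> isCont y x"
  unfolding sol_def by (meson DERIV_isCont)

lemma wronsk_deriv:
  assumes s1: "sol p1 y1 d1" and s2: "sol p2 y2 d2"
  shows "((\<lambda>w. exp (w\<^sup>2 / 4) * (y1 w * d2 w - d1 w * y2 w)) has_real_derivative
           exp (w\<^sup>2 / 4) * ((p1 - p2) / 2) * y1 w * y2 w) (at w)"
proof -
  have a: "(y1 has_real_derivative d1 w) (at w)" "(d1 has_real_derivative (- (w * d1 w + p1 * y1 w) / 2)) (at w)"
    "(y2 has_real_derivative d2 w) (at w)" "(d2 has_real_derivative (- (w * d2 w + p2 * y2 w) / 2)) (at w)"
    using s1 s2 unfolding sol_def by auto
  show ?thesis
    by (rule derivative_eq_intros a refl | simp)+ (simp add: field_simps power2_eq_square)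
qed

lemma deriv_nonneg_left:
  fixes y d :: "real \<Rightarrow> real"
  assumes "(y has_real_derivative d a) (at a)" "y a = 0" "a < b" "\<forall>w\<in>{a<..<b}. y w > 0"
  shows "d a \<ge> 0"
proof (rule ccontr)
  assume "\<not> d a \<ge> 0"
  then obtain \<delta> where \<delta>: "\<delta> > 0" "\<forall>h>0. h < \<delta> \<longrightarrow> y a > y (a + h)"
    using DERIV_neg_dec_right[OF assms(1)] by force
  define h where "h = min (\<delta>/2) ((b - a)/2)"
  have h1: "h \<le> \<delta>/2" "h \<le> (b - a) / 2" unfolding h_def by (rule min.cobounded1, rule min.cobounded2)
  have "h > 0" using \<delta> assms by (auto simp: h_def)
  moreover have "h < \<delta>" using h1 \<delta> by linarith
  moreover have "h \<le> (b - a) / 2" using h1 by simp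
  ultimately have "h > 0" "h < \<delta>" "h \<le> (b - a) / 2" by auto
  then have "h < b - a" using \<open>a < b\<close> by argo
  then have "a + h \<in> {a<..<b}" using \<open>h > 0\<close> by simp
  then have "y (a + h) > 0" using assms(4) by blast
  moreover have "y (a + h) < 0" using \<delta>(2) \<open>h > 0\<close> \<open>h < \<delta>\<close> assms(2) by force
  ultimately show False by simp
qed

lemma deriv_nonpos_right:
  fixes y d :: "real \<Rightarrow> real"
  assumes "(y has_real_derivative d b) (at b)" "y b = 0" "a < b" "\<forall>w\<in>{a<..<b}. y w > 0"
  shows "d b \<le> 0"
proof (rule ccontr)
  assume "\<not> d b \<le> 0"
  then obtain \<delta> where \<delta>: "\<delta> > 0" "\<forall>h>0. h < \<delta> \<longrightarrow> y (b - h) < y b"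
    using DERIV_pos_inc_left[OF assms(1)] by force
  define h where "h = min (\<delta>/2) ((b - a)/2)"
  have h1: "h \<le> \<delta>/2" "h \<le> (b - a) / 2" unfolding h_def by (rule min.cobounded1, rule min.cobounded2)
  have "h > 0" using \<delta> assms by (auto simp: h_def)
  moreover have "h < \<delta>" using h1 \<delta> by linarith
  moreover have "h \<le> (b - a) / 2" using h1 by simp
  ultimately have "h > 0" "h < \<delta>" "h \<le> (b - a) / 2" by auto
  then have "h < b - a" using \<open>a < b\<close> by argo
  then have "b - h \<in> {a<..<b}" using \<open>h > 0\<close> by simp
  then have "y (b - h) > 0" using assms(4) by blast
  moreover have "y (b - h) < 0" using \<delta>(2) \<open>h > 0\<close> \<open>h < \<delta>\<close> assms(2) by force
  ultimately show False by simp
qed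

lemma nonneg_left_end:
  fixes y :: "real \<Rightarrow> real"
  assumes "isCont y a" "a < b" "\<forall>w\<in>{a<..<b}. y w > 0"
  shows "y a \<ge> 0"
proof -
  have "(y \<longlongrightarrow> y a) (at_right a)" using assms(1)
    by (simp add: continuous_at_imp_continuous_at_within continuous_within filterlim_at_split isCont_def)
  moreover have "\<forall>\<^sub>F w in at_right a. y w \<ge> 0"
    using assms(2,3) unfolding eventually_at_right[OF assms(2)] by (intro exI[of _ b]) (auto intro: less_imp_le)
  ultimately show ?thesis by (intro tendsto_lowerbound) auto
qed

lemma nonneg_right_end:
  fixes y :: "real \<Rightarrow> real"
  assumes "isCont y b" "a < b" "\<forall>w\<in>{a<..<b}. y w > 0"
  shows "y b \<ge> 0"
proof -
  have "(y \<longlongrightarrow> y b) (at_left b)" using assms(1)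
    by (simp add: continuous_at_imp_continuous_at_within continuous_within filterlim_at_split isCont_def)
  moreover have "\<forall>\<^sub>F w in at_left b. y w \<ge> 0"
    using assms(2,3) unfolding eventually_at_left[OF assms(2)] by (intro exI[of _ a]) (auto intro: less_imp_le)
  ultimately show ?thesis by (intro tendsto_lowerbound) auto
qed

lemma neg_prod: "(c::real) < 0 \<Longrightarrow> u > 0 \<Longrightarrow> v > 0 \<Longrightarrow> E > 0 \<Longrightarrow> E * c * u * v < 0"
  by (simp add: mult_neg_pos mult_pos_neg)

lemma sturm_core:
  assumes ab: "a < b" and p: "p1 < p2" and s1: "sol p1 y1 d1" and s2: "sol p2 y2 d2"
    and ya: "y1 a = 0" and yb: "y1 b = 0"
    and pos1: "\<forall>w\<in>{a<..<b}. y1 w > 0" and pos2: "\<forall>w\<in>{a<..<b}. y2 w > 0"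
  shows False
proof -
  define W where "W w = exp (w\<^sup>2 / 4) * (y1 w * d2 w - d1 w * y2 w)" for w
  have dW: "(W has_real_derivative exp (w\<^sup>2 / 4) * ((p1 - p2) / 2) * y1 w * y2 w) (at w)" for w
    unfolding W_def[abs_def] by (rule wronsk_deriv[OF s1 s2])
  have d1a: "d1 a \<ge> 0"
    by (rule deriv_nonneg_left[OF _ ya ab pos1]) (use s1 in \<open>auto simp: sol_def\<close>)
  have d1b: "d1 b \<le> 0"
    by (rule deriv_nonpos_right[OF _ yb ab pos1]) (use s1 in \<open>auto simp: sol_def\<close>)
  have y2a: "y2 a \<ge> 0" by (rule nonneg_left_end[OF sol_isCont[OF s2] ab pos2])
  have y2b: "y2 b \<ge> 0" by (rule nonneg_right_end[OF sol_isCont[OF s2] ab pos2])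
  have Wa: "W a \<le> 0" using d1a y2a by (simp add: W_def ya mult_nonneg_nonneg)
  have "d1 b * y2 b \<le> 0" using d1b y2b by (rule mult_nonpos_nonneg)
  then have Wb: "W b \<ge> 0" by (simp add: W_def yb mult_nonneg_nonpos)
  have "W b < W a"
  proof (rule DERIV_neg_imp_decreasing_open[OF ab])
    fix x assume "a < x" "x < b"
    then have "exp (x\<^sup>2 / 4) * ((p1 - p2) / 2) * y1 x * y2 x < 0"
      using pos1 pos2 p by (intro neg_prod) auto
    then show "\<exists>y. DERIV W x :> y \<and> y < 0" using dW by blast
  next
    show "continuous_on {a..b} W" by (rule continuous_at_imp_continuous_on) (use dW DERIV_isCont in blast)
  qed
  then show False using Wa Wb by simp
qed

lemma sturm_core_half:
  assumes p: "p1 < p2" and s1: "sol p1 y1 d1" and s2: "sol p2 y2 d2"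
    and ya: "y1 a = 0"
    and pos1: "\<forall>w>a. y1 w > 0" and pos2: "\<forall>w>a. y2 w > 0"
    and lim: "((\<lambda>w. exp (w\<^sup>2 / 4) * (y1 w * d2 w - d1 w * y2 w)) \<longlongrightarrow> 0) at_top"
  shows False
proof -
  define W where "W w = exp (w\<^sup>2 / 4) * (y1 w * d2 w - d1 w * y2 w)" for w
  have dW: "(W has_real_derivative exp (w\<^sup>2 / 4) * ((p1 - p2) / 2) * y1 w * y2 w) (at w)" for w
    unfolding W_def[abs_def] by (rule wronsk_deriv[OF s1 s2])
  have ab: "a < a + 1" by simp
  have pos1': "\<forall>w\<in>{a<..<a+1}. y1 w > 0" and pos2': "\<forall>w\<in>{a<..<a+1}. y2 w > 0" using pos1 pos2 by auto
  have d1a: "d1 a \<ge> 0"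
    by (rule deriv_nonneg_left[OF _ ya ab pos1']) (use s1 in \<open>auto simp: sol_def\<close>)
  have y2a: "y2 a \<ge> 0" by (rule nonneg_left_end[OF sol_isCont[OF s2] ab pos2'])
  have Wa: "W a \<le> 0" using d1a y2a by (simp add: W_def ya mult_nonneg_nonneg)
  have dec: "W v < W u" if "a \<le> u" "u < v" for u v
  proof (rule DERIV_neg_imp_decreasing_open[OF that(2)])
    fix x assume "u < x" "x < v"
    then have "exp (x\<^sup>2 / 4) * ((p1 - p2) / 2) * y1 x * y2 x < 0"
      using pos1 pos2 p that by (intro neg_prod) auto
    then show "\<exists>y. DERIV W x :> y \<and> y < 0" using dW by blast
  next
    show "continuous_on {u..v} W" by (rule continuous_at_imp_continuous_on) (use dW DERIV_isCont in blast)
  qed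
  have W1: "W (a + 1) < 0" using dec[of a "a+1"] Wa by simp
  have "\<forall>\<^sub>F t in at_top. W t \<le> W (a + 1)"
    using eventually_gt_at_top[of "a + 1"] by eventually_elim (use dec[of "a + 1"] in \<open>auto intro: less_imp_le\<close>)
  moreover have "(W \<longlongrightarrow> 0) at_top" using lim by (simp add: W_def[abs_def])
  ultimately have "0 \<le> W (a + 1)" by (intro tendsto_upperbound) auto
  then show False using W1 by simp
qed


lemma const_sign:
  fixes y :: "real \<Rightarrow> real"
  assumes c: "\<And>x. isCont y x" and nz: "\<forall>w\<in>S. y w \<noteq> 0"
    and conv: "\<And>u v w. u \<in> S \<Longrightarrow> v \<in> S \<Longrightarrow> u \<le> w \<Longrightarrow> w \<le> v \<Longrightarrow> w \<in> S"
  shows "(\<forall>w\<in>S. y w > 0) \<or> (\<forall>w\<in>S. y w < 0)"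
proof (rule ccontr)
  assume "\<not> ?thesis"
  then obtain u v where u: "u \<in> S" "y u < 0" and v: "v \<in> S" "y v > 0"
    using nz by (metis linorder_neqE_linordered_idom)
  have co: "continuous_on A y" for A using c by (simp add: continuous_at_imp_continuous_on)
  show False
  proof (cases "u \<le> v")
    case True
    obtain x where "u \<le> x" "x \<le> v" "y x = 0" using IVT'[of y u 0 v, OF _ _ True co] u v by auto
    then show False using conv[OF u(1) v(1)] nz by auto
  next
    case False
    then have vu: "v \<le> u" by simp
    obtain x where "v \<le> x" "x \<le> u" "y x = 0" using IVT2'[of y u 0 v, OF _ _ vu co] u v by auto
    then show False using conv[OF v(1) u(1)] nz by auto
  qed
qed

lemma sturm_interval:
  assumes ab: "a < b" and p: "p1 < p2" and s1: "sol p1 y1 d1" and s2: "sol p2 y2 d2"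
    and ya: "y1 a = 0" and yb: "y1 b = 0" and nz: "\<forall>w\<in>{a<..<b}. y1 w \<noteq> 0"
  shows "\<exists>w\<in>{a<..<b}. y2 w = 0"
proof (rule ccontr)
  assume "\<not> ?thesis"
  then have nz2: "\<forall>w\<in>{a<..<b}. y2 w \<noteq> 0" by auto
  have cv: "\<And>u v w. u \<in> {a<..<b} \<Longrightarrow> v \<in> {a<..<b} \<Longrightarrow> u \<le> w \<Longrightarrow> w \<le> v \<Longrightarrow> w \<in> {a<..<b}" by auto
  have c1: "(\<forall>w\<in>{a<..<b}. y1 w > 0) \<or> (\<forall>w\<in>{a<..<b}. y1 w < 0)"
    by (rule const_sign[OF sol_isCont[OF s1] nz cv])
  have c2: "(\<forall>w\<in>{a<..<b}. y2 w > 0) \<or> (\<forall>w\<in>{a<..<b}. y2 w < 0)"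
    by (rule const_sign[OF sol_isCont[OF s2] nz2 cv])
  have s1': "sol p1 (\<lambda>w. - y1 w) (\<lambda>w. - d1 w)" and s2': "sol p2 (\<lambda>w. - y2 w) (\<lambda>w. - d2 w)"
    using sol_neg s1 s2 by auto
  from c1 c2 show False
  proof (elim disjE)
    assume "\<forall>w\<in>{a<..<b}. y1 w > 0" "\<forall>w\<in>{a<..<b}. y2 w > 0"
    then show False using sturm_core[OF ab p s1 s2 ya yb] by blast
  next
    assume "\<forall>w\<in>{a<..<b}. y1 w > 0" "\<forall>w\<in>{a<..<b}. y2 w < 0"
    then show False using sturm_core[OF ab p s1 s2' ya yb] by auto
  next
    assume "\<forall>w\<in>{a<..<b}. y1 w < 0" "\<forall>w\<in>{a<..<b}. y2 w > 0"
    then show False using sturm_core[OF ab p s1' s2] ya yb by auto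
  next
    assume "\<forall>w\<in>{a<..<b}. y1 w < 0" "\<forall>w\<in>{a<..<b}. y2 w < 0"
    then show False using sturm_core[OF ab p s1' s2'] ya yb by auto
  qed
qed

lemma sturm_half:
  assumes p: "p1 < p2" and s1: "sol p1 y1 d1" and s2: "sol p2 y2 d2"
    and ya: "y1 a = 0" and nz: "\<forall>w>a. y1 w \<noteq> 0"
    and lim: "((\<lambda>w. exp (w\<^sup>2 / 4) * (y1 w * d2 w - d1 w * y2 w)) \<longlongrightarrow> 0) at_top"
  shows "\<exists>w>a. y2 w = 0"
proof (rule ccontr)
  assume "\<not> ?thesis"
  then have nz2: "\<forall>w\<in>{a<..}. y2 w \<noteq> 0" by auto
  have nz1: "\<forall>w\<in>{a<..}. y1 w \<noteq> 0" using nz by auto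
  have cv: "\<And>u v w. u \<in> {a<..} \<Longrightarrow> v \<in> {a<..} \<Longrightarrow> u \<le> w \<Longrightarrow> w \<le> v \<Longrightarrow> w \<in> {a<..}" by auto
  have c1: "(\<forall>w\<in>{a<..}. y1 w > 0) \<or> (\<forall>w\<in>{a<..}. y1 w < 0)"
    by (rule const_sign[OF sol_isCont[OF s1] nz1 cv])
  have c2: "(\<forall>w\<in>{a<..}. y2 w > 0) \<or> (\<forall>w\<in>{a<..}. y2 w < 0)"
    by (rule const_sign[OF sol_isCont[OF s2] nz2 cv])
  have s1': "sol p1 (\<lambda>w. - y1 w) (\<lambda>w. - d1 w)" and s2': "sol p2 (\<lambda>w. - y2 w) (\<lambda>w. - d2 w)"
    using sol_neg s1 s2 by auto
  have limn: "((\<lambda>w. - (exp (w\<^sup>2 / 4) * (y1 w * d2 w - d1 w * y2 w))) \<longlongrightarrow> 0) at_top"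
    using tendsto_minus[OF lim] by simp
  have e1: "(\<lambda>w. exp (w\<^sup>2 / 4) * ((- y1 w) * d2 w - (- d1 w) * y2 w)) = (\<lambda>w. - (exp (w\<^sup>2 / 4) * (y1 w * d2 w - d1 w * y2 w)))"
    by (rule ext) (simp add: algebra_simps)
  have e2: "(\<lambda>w. exp (w\<^sup>2 / 4) * (y1 w * (- d2 w) - d1 w * (- y2 w))) = (\<lambda>w. - (exp (w\<^sup>2 / 4) * (y1 w * d2 w - d1 w * y2 w)))"
    by (rule ext) (simp add: algebra_simps)
  have e3: "(\<lambda>w. exp (w\<^sup>2 / 4) * ((- y1 w) * (- d2 w) - (- d1 w) * (- y2 w))) = (\<lambda>w. exp (w\<^sup>2 / 4) * (y1 w * d2 w - d1 w * y2 w))"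
    by (rule ext) (simp add: algebra_simps)
  from c1 c2 show False
  proof (elim disjE)
    assume "\<forall>w\<in>{a<..}. y1 w > 0" "\<forall>w\<in>{a<..}. y2 w > 0"
    then show False using sturm_core_half[where a=a, OF p s1 s2 ya _ _ lim] by auto
  next
    assume "\<forall>w\<in>{a<..}. y1 w > 0" "\<forall>w\<in>{a<..}. y2 w < 0"
    then show False using sturm_core_half[where a=a, OF p s1 s2' ya _ _ limn[folded e2]] by auto
  next
    assume "\<forall>w\<in>{a<..}. y1 w < 0" "\<forall>w\<in>{a<..}. y2 w > 0"
    then show False using sturm_core_half[where a=a, OF p s1' s2 _ _ _ limn[folded e1]] ya by auto
  next
    assume "\<forall>w\<in>{a<..}. y1 w < 0" "\<forall>w\<in>{a<..}. y2 w < 0"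
    then show False using sturm_core_half[where a=a, OF p s1' s2' _ _ _ lim[folded e3]] ya by auto
  qed
qed

lemma rolle_count:
  fixes g g' :: "real \<Rightarrow> real"
  assumes d: "\<And>w. (g has_real_derivative g' w) (at w)" and ga: "g a = 0"
    and F: "finite F" "F \<subseteq> {w. a < w \<and> g w = 0}"
  shows "\<exists>G. finite G \<and> G \<subseteq> {w. a < w \<and> g' w = 0} \<and> card G = card F"
proof -
  have co: "continuous_on A g" for A using d by (meson DERIV_isCont continuous_at_imp_continuous_on)
  have "F \<subseteq> {w. a < w \<and> g w = 0} \<longrightarrow> (\<exists>G. finite G \<and> G \<subseteq> {w. a < w \<and> g' w = 0} \<and> card G = card F
           \<and> (\<forall>x\<in>G. \<exists>y\<in>F. x < y))"
    using F(1)
  proof (induction F rule: finite_linorder_max_induct)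
    case empty
    then show ?case by (intro impI exI[of _ "{}"]) auto
  next
    case (insert b A)
    show ?case
    proof
      assume sub: "insert b A \<subseteq> {w. a < w \<and> g w = 0}"
      then obtain GA where GA: "finite GA" "GA \<subseteq> {w. a < w \<and> g' w = 0}" "card GA = card A"
        "\<forall>x\<in>GA. \<exists>y\<in>A. x < y" using insert.IH by auto
      define c where "c = (if A = {} then a else Max A)"
      have gc: "g c = 0" and ac: "a \<le> c" and cb: "c < b"
      proof -
        show "g c = 0" using sub ga Max_in[OF insert.hyps(1)] by (auto simp: c_def)
        show "a \<le> c" using sub Max_in[OF insert.hyps(1)] by (force simp: c_def)
        show "c < b" using sub insert.hyps Max_in[OF insert.hyps(1)] by (auto simp: c_def)
      qed
      have gb: "g b = 0" using sub by auto
      have dif: "\<And>x. g differentiable (at x)" using d real_differentiable_def by blast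
      obtain z where z: "c < z" "z < b" "DERIV g z :> 0"
        using Rolle[of c b g] cb gc gb co dif by metis
      have g'z: "g' z = 0" using DERIV_unique[OF d[of z] z(3)] .
      have zG: "z \<notin> GA"
      proof
        assume "z \<in> GA"
        then obtain y where "y \<in> A" "z < y" using GA(4) by auto
        then have "y \<le> c" using insert.hyps(1) by (auto simp: c_def)
        then show False using \<open>z < y\<close> z(1) by simp
      qed
      have bA: "b \<notin> A" using insert.hyps(2) by auto
      show "\<exists>G. finite G \<and> G \<subseteq> {w. a < w \<and> g' w = 0} \<and> card G = card (insert b A) \<and> (\<forall>x\<in>G. \<exists>y\<in>insert b A. x < y)"
      proof (intro exI[of _ "insert z GA"] conjI)
        show "finite (insert z GA)" using GA by simp
        show "insert z GA \<subseteq> {w. a < w \<and> g' w = 0}" using GA(2) g'z ac z(1) by auto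
        show "card (insert z GA) = card (insert b A)" using GA zG bA insert.hyps(1) by simp
        show "\<forall>x\<in>insert z GA. \<exists>y\<in>insert b A. x < y" using GA(4) z(2) by auto
      qed
    qed
  qed
  then show ?thesis using F(2) by blast
qed

lemma first_zero:
  fixes y :: "real \<Rightarrow> real"
  assumes c: "\<And>x. isCont y x" and d: "(y has_real_derivative d0) (at 0)" and d0: "d0 > 0"
    and y0: "y 0 = 0" and z0: "z0 > 0" "y z0 = 0"
  shows "\<exists>z>0. y z = 0 \<and> (\<forall>w\<in>{0<..<z}. y w \<noteq> 0)"
proof -
  obtain \<delta> where \<delta>: "\<delta> > 0" "\<forall>h>0. h < \<delta> \<longrightarrow> y 0 < y (0 + h)"
    using DERIV_pos_inc_right[OF d d0] by blast
  have big: "w \<ge> \<delta>" if "w > 0" "y w = 0" for w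
    using \<delta> that y0 by (metis add_0 less_irrefl not_le)
  define T where "T = {w. \<delta> \<le> w \<and> y w = 0}"
  have co: "continuous_on UNIV y" using c by (simp add: continuous_at_imp_continuous_on)
  have clT: "closed T" unfolding T_def
    by (intro closed_Collect_conj closed_Collect_le closed_Collect_eq co continuous_on_const continuous_on_id)
  have z0T: "z0 \<in> T" using big z0 by (auto simp: T_def)
  have bdd: "bdd_below T" by (rule bdd_belowI[of _ \<delta>]) (auto simp: T_def)
  have IT: "Inf T \<in> T" using closed_contains_Inf[OF _ bdd clT] z0T by auto
  show ?thesis
  proof (intro exI[of _ "Inf T"] conjI ballI)
    show "Inf T > 0" using IT \<delta> by (auto simp: T_def)
    show "y (Inf T) = 0" using IT by (auto simp: T_def)
    fix w assume w: "w \<in> {0<..<Inf T}"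
    show "y w \<noteq> 0"
    proof
      assume "y w = 0"
      then have "w \<in> T" using big w by (auto simp: T_def)
      then have "Inf T \<le> w" using bdd by (rule cInf_lower)
      then show False using w by simp
    qed
  qed
qed


lemma fp_zero [simp]: "fp p 0 = 0"
  unfolding fp_def by simp

lemma Cf_zero: "Cf s 0 = Mf s"
  unfolding Cf_def Mf_def by simp

lemma Mf_pos:
  assumes s: "s > 0"
  shows "Mf s > 0"
proof -
  let ?g = "\<lambda>x::real. x powr (s-1) * exp (-(x\<^sup>2))"
  define c where "c = exp (-4) * min 1 (2 powr (s-1))"
  have c0: "c > 0" by (simp add: c_def)
  have low: "c \<le> ?g x" if x: "x \<in> {1..2}" for x
  proof -
    have p: "min 1 (2 powr (s-1)) \<le> x powr (s-1)"
    proof (cases "s \<ge> 1")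
      case True
      then have "1 powr (s-1) \<le> x powr (s-1)" using x by (intro powr_mono2) auto
      then show ?thesis by simp
    next
      case False
      then have "2 powr (s-1) \<le> x powr (s-1)" using x by (intro powr_mono2') auto
      then show ?thesis by simp
    qed
    have e: "exp (-4) \<le> exp (-(x\<^sup>2))"
    proof -
      have "x\<^sup>2 \<le> 2\<^sup>2" using x by (intro power_mono) auto
      then show ?thesis by simp
    qed
    have "c = min 1 (2 powr (s-1)) * exp (-4)" by (simp add: c_def mult.commute)
    also have "\<dots> \<le> x powr (s-1) * exp (-(x\<^sup>2))"
      using p e by (intro mult_mono) auto
    finally show ?thesis .
  qed
  have gi: "?g integrable_on {0<..}" by (rule int_one[OF s])
  have gi12: "?g integrable_on {1..2}" by (rule integrable_on_subinterval[OF gi]) auto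
  have "c = integral {1..2::real} (\<lambda>x. c)" by simp
  also have "\<dots> \<le> integral {1..2} ?g"
    by (rule integral_le[OF _ gi12 low]) (auto simp: integrable_const_ivl)
  also have "\<dots> \<le> integral {0<..} ?g"
    by (rule integral_subset_le[OF _ gi12 gi]) auto
  finally show ?thesis using c0 unfolding Mf_def by simp
qed

lemma sol_fp:
  assumes p: "p > 0"
  shows "sol p (fp p) (Cf (p + 1))"
  unfolding sol_def
proof (intro allI conjI)
  fix w
  show "(fp p has_real_derivative Cf (p + 1) w) (at w)" by (rule fp_deriv[OF p])
  have "(Cf (p + 1) has_real_derivative - fp (p + 1 + 1) w) (at w)" by (rule Cf_deriv) (use p in simp)
  moreover have "(p + 1 - 1) * fp (p + 1 - 1) w - 2 * fp (p + 1 + 1) w + w * Cf (p + 1) w = 0"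
    by (rule parts_sin) (use p in simp)
  ultimately show "(Cf (p + 1) has_real_derivative - (w * Cf (p + 1) w + p * fp p w) / 2) (at w)"
    by (rule_tac DERIV_cong) (simp_all add: field_simps)
qed

lemma Cf1_formula: "Cf 1 w = Cf 1 0 * exp (- (w\<^sup>2 / 4))"
proof -
  define h where "h w = exp (w\<^sup>2 / 4) * Cf 1 w" for w
  have "(h has_real_derivative 0) (at w)" for w
  proof -
    have d: "(Cf 1 has_real_derivative - fp 2 w) (at w)" using Cf_deriv[of 1 w] by simp
    have "(h has_real_derivative exp (w\<^sup>2 / 4) * (2 * w / 4) * Cf 1 w + exp (w\<^sup>2 / 4) * (- fp 2 w)) (at w)"
      unfolding h_def[abs_def] by (rule derivative_eq_intros d refl | simp)+
    moreover have "exp (w\<^sup>2 / 4) * (2 * w / 4) * Cf 1 w + exp (w\<^sup>2 / 4) * (- fp 2 w) = 0"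
      using parts_sin1[of w] by (simp add: field_simps)
    ultimately show ?thesis by (rule DERIV_cong)
  qed
  then have "h w = h 0" using DERIV_isconst_all by blast
  then have "exp (w\<^sup>2 / 4) * Cf 1 w = Cf 1 0" by (simp add: h_def)
  then show ?thesis by (simp add: field_simps exp_minus)
qed

lemma fp2_formula: "fp 2 w = w / 2 * Cf 1 0 * exp (- (w\<^sup>2 / 4))"
  using parts_sin1[of w] Cf1_formula[of w] by (simp add: field_simps)

lemma fp2_pos: "w > 0 \<Longrightarrow> fp 2 w > 0"
  using Mf_pos[of 1] by (simp add: fp2_formula Cf_zero)

lemma base_pos:
  assumes p: "0 < p" "p \<le> 2" and w: "w > 0"
  shows "fp p w \<noteq> 0"
proof
  assume z: "fp p w = 0"
  show False
  proof (cases "p = 2")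
    case True then show False using fp2_pos[OF w] z by simp
  next
    case False
    then have p2: "p < 2" using p by simp
    have s: "sol p (fp p) (Cf (p + 1))" by (rule sol_fp) (use p in simp)
    have "Cf (p + 1) 0 > 0" using Mf_pos[of "p + 1"] p by (simp add: Cf_zero)
    then obtain z where z: "z > 0" "fp p z = 0" "\<forall>v\<in>{0<..<z}. fp p v \<noteq> 0"
      using first_zero[of "fp p" "Cf (p+1) 0" w, OF sol_isCont[OF s] fp_deriv[OF p(1)]] z w by auto
    obtain v where "v \<in> {0<..<z}" "fp 2 v = 0"
      using sturm_interval[OF z(1) p2 s sol_fp[of 2] _ z(2) z(3)] by auto
    then show False using fp2_pos[of v] by simp
  qed
qed


lemma chain:
  assumes p: "p > 0" and F: "finite F" "F \<subseteq> {w. 0 < w \<and> fp (p + 2) w = 0}"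
  shows "\<exists>H. finite H \<and> H \<subseteq> {w. 0 < w \<and> fp p w = 0} \<and> card F \<le> card H + 1"
proof -
  define g1 where "g1 w = exp (w\<^sup>2 / 4) * fp (p + 2) w" for w
  define g1' where "g1' w = exp (w\<^sup>2 / 4) * ((p + 1) / 2 * Cf (p + 1) w)" for w
  have dg1: "(g1 has_real_derivative g1' w) (at w)" for w
  proof -
    have d: "(fp (p + 2) has_real_derivative Cf (p + 2 + 1) w) (at w)" by (rule fp_deriv) (use p in simp)
    have pc: "(p + 2 - 1) * Cf (p + 2 - 1) w - 2 * Cf (p + 2 + 1) w - w * fp (p + 2) w = 0"
      by (rule parts_cos) (use p in simp)
    have "(g1 has_real_derivative exp (w\<^sup>2 / 4) * (2 * w / 4) * fp (p + 2) w + exp (w\<^sup>2 / 4) * Cf (p + 2 + 1) w) (at w)"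
      unfolding g1_def[abs_def] by (rule derivative_eq_intros d refl | simp)+
    moreover have "exp (w\<^sup>2 / 4) * (2 * w / 4) * fp (p + 2) w + exp (w\<^sup>2 / 4) * Cf (p + 2 + 1) w = g1' w"
    proof -
      have e: "Cf (p + 2 + 1) w = ((p + 1) * Cf (p + 1) w - w * fp (p + 2) w) / 2"
        using pc by (simp add: field_simps add.commute)
      show ?thesis by (subst e) (simp add: g1'_def field_simps)
    qed
    ultimately show ?thesis by (rule DERIV_cong)
  qed
  have F': "F \<subseteq> {w. 0 < w \<and> g1 w = 0}" using F(2) by (auto simp: g1_def)
  obtain G where G: "finite G" "G \<subseteq> {w. 0 < w \<and> g1' w = 0}" "card G = card F"
    using rolle_count[OF dg1 _ F(1) F'] by (auto simp: g1_def)
  have GC: "G \<subseteq> {w. 0 < w \<and> Cf (p + 1) w = 0}" using G(2) p by (auto simp: g1'_def)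
  show ?thesis
  proof (cases "G = {}")
    case True
    then show ?thesis using G by (intro exI[of _ "{}"]) auto
  next
    case False
    define c where "c = Min G"
    have cG: "c \<in> G" using Min_in[OF G(1) False] by (simp add: c_def)
    have c0: "c > 0" "Cf (p + 1) c = 0" using cG GC by auto
    define g2 where "g2 w = exp (w\<^sup>2 / 4) * Cf (p + 1) w" for w
    define g2' where "g2' w = exp (w\<^sup>2 / 4) * (- (p / 2) * fp p w)" for w
    have dg2: "(g2 has_real_derivative g2' w) (at w)" for w
    proof -
      have d: "(Cf (p + 1) has_real_derivative - fp (p + 1 + 1) w) (at w)" by (rule Cf_deriv) (use p in simp)
      have ps: "(p + 1 - 1) * fp (p + 1 - 1) w - 2 * fp (p + 1 + 1) w + w * Cf (p + 1) w = 0"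
        by (rule parts_sin) (use p in simp)
      have "(g2 has_real_derivative exp (w\<^sup>2 / 4) * (2 * w / 4) * Cf (p + 1) w + exp (w\<^sup>2 / 4) * (- fp (p + 1 + 1) w)) (at w)"
        unfolding g2_def[abs_def] by (rule derivative_eq_intros d refl | simp)+
      moreover have "exp (w\<^sup>2 / 4) * (2 * w / 4) * Cf (p + 1) w + exp (w\<^sup>2 / 4) * (- fp (p + 1 + 1) w) = g2' w"
      proof -
        have e: "fp (p + 1 + 1) w = (p * fp p w + w * Cf (p + 1) w) / 2"
          using ps by (simp add: field_simps)
        show ?thesis by (subst e) (simp add: g2'_def field_simps)
      qed
      ultimately show ?thesis by (rule DERIV_cong)
    qed
    have G': "G - {c} \<subseteq> {w. c < w \<and> g2 w = 0}"
    proof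
      fix x assume x: "x \<in> G - {c}"
      then have "c \<le> x" using G(1) by (auto simp: c_def)
      then show "x \<in> {w. c < w \<and> g2 w = 0}" using x GC by (auto simp: g2_def)
    qed
    obtain H where H: "finite H" "H \<subseteq> {w. c < w \<and> g2' w = 0}" "card H = card (G - {c})"
      using rolle_count[OF dg2 _ _ G'] c0 G(1) by (auto simp: g2_def)
    have "H \<subseteq> {w. 0 < w \<and> fp p w = 0}" using H(2) c0 p by (auto simp: g2'_def)
    moreover have "card F \<le> card H + 1" using H(3) G(3) cG G(1) False by (simp add: card_Diff_singleton)
    ultimately show ?thesis using H(1) by blast
  qed
qed

lemma ub:
  assumes "2 * real k < p" "p \<le> 2 * real k + 2" "finite F" "F \<subseteq> {w. 0 < w \<and> fp p w = 0}"
  shows "card F \<le> k"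
  using assms
proof (induction k arbitrary: p F)
  case 0
  then have "F = {}" using base_pos[of p] by auto
  then show ?case by simp
next
  case (Suc k)
  have p2: "p - 2 > 0" using Suc.prems(1) by simp
  obtain H where H: "finite H" "H \<subseteq> {w. 0 < w \<and> fp (p - 2) w = 0}" "card F \<le> card H + 1"
    using chain[OF p2 Suc.prems(3)] Suc.prems(4) by auto
  have "card H \<le> k" by (rule Suc.IH[OF _ _ H(1) H(2)]) (use Suc.prems in auto)
  then show ?case using H(3) by simp
qed


lemma decay:
  "\<forall>s. real m < s \<longrightarrow> (\<exists>D. \<forall>w\<ge>1. \<bar>fp s w\<bar> \<le> D / w ^ m \<and> \<bar>Cf s w\<bar> \<le> D / w ^ m)"
proof (induction m)
  case 0
  show ?case
  proof (intro allI impI)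
    fix s :: real assume "real 0 < s"
    then have s: "s > 0" by simp
    show "\<exists>D. \<forall>w\<ge>1. \<bar>fp s w\<bar> \<le> D / w ^ 0 \<and> \<bar>Cf s w\<bar> \<le> D / w ^ 0"
      using fp_bound[OF s] Cf_bound[OF s] by (intro exI[of _ "Mf s"]) auto
  qed
next
  case (Suc m)
  show ?case
  proof (intro allI impI)
    fix s :: real assume sm: "real (Suc m) < s"
    have s1: "real m < s - 1" "real m < s + 1" "s > 1" using sm by auto
    obtain D1 where D1: "\<forall>w\<ge>1. \<bar>fp (s - 1) w\<bar> \<le> D1 / w ^ m \<and> \<bar>Cf (s - 1) w\<bar> \<le> D1 / w ^ m"
      using Suc.IH s1(1) by blast
    obtain D2 where D2: "\<forall>w\<ge>1. \<bar>fp (s + 1) w\<bar> \<le> D2 / w ^ m \<and> \<bar>Cf (s + 1) w\<bar> \<le> D2 / w ^ m"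
      using Suc.IH s1(2) by blast
    define D where "D = (s - 1) * D1 + 2 * D2"
    show "\<exists>D. \<forall>w\<ge>1. \<bar>fp s w\<bar> \<le> D / w ^ Suc m \<and> \<bar>Cf s w\<bar> \<le> D / w ^ Suc m"
    proof (intro exI[of _ D] allI impI conjI)
      fix w :: real assume w: "w \<ge> 1"
      have wp: "w > 0" "w ^ m > 0" using w by auto
      have pc: "(s - 1) * Cf (s - 1) w - 2 * Cf (s + 1) w - w * fp s w = 0" by (rule parts_cos[OF s1(3)])
      have ps: "(s - 1) * fp (s - 1) w - 2 * fp (s + 1) w + w * Cf s w = 0" by (rule parts_sin[OF s1(3)])
      have e: "fp s w = ((s - 1) * Cf (s - 1) w - 2 * Cf (s + 1) w) / w"
        using pc wp by (simp add: field_simps)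
      have "\<bar>fp s w\<bar> = \<bar>(s - 1) * Cf (s - 1) w - 2 * Cf (s + 1) w\<bar> / w"
        using wp by (subst e) simp
      also have "\<dots> \<le> ((s - 1) * \<bar>Cf (s - 1) w\<bar> + 2 * \<bar>Cf (s + 1) w\<bar>) / w"
        using s1 wp by (intro divide_right_mono) (auto simp: abs_mult intro: order.trans[OF abs_triangle_ineq4])
      also have "\<dots> \<le> ((s - 1) * (D1 / w ^ m) + 2 * (D2 / w ^ m)) / w"
        using s1 wp D1 D2 w by (intro divide_right_mono add_mono mult_left_mono) auto
      also have "\<dots> = D / w ^ Suc m" using wp by (simp add: D_def field_simps)
      finally show "\<bar>fp s w\<bar> \<le> D / w ^ Suc m" .
      have e: "Cf s w = (2 * fp (s + 1) w - (s - 1) * fp (s - 1) w) / w"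
        using ps wp by (simp add: field_simps)
      have "\<bar>Cf s w\<bar> = \<bar>2 * fp (s + 1) w - (s - 1) * fp (s - 1) w\<bar> / w"
        using wp by (subst e) simp
      also have "\<dots> \<le> ((s - 1) * \<bar>fp (s - 1) w\<bar> + 2 * \<bar>fp (s + 1) w\<bar>) / w"
        using s1 wp by (intro divide_right_mono) (auto simp: abs_mult intro: order.trans[OF abs_triangle_ineq4])
      also have "\<dots> \<le> ((s - 1) * (D1 / w ^ m) + 2 * (D2 / w ^ m)) / w"
        using s1 wp D1 D2 w by (intro divide_right_mono add_mono mult_left_mono) auto
      also have "\<dots> = D / w ^ Suc m" using wp by (simp add: D_def field_simps)
      finally show "\<bar>Cf s w\<bar> \<le> D / w ^ Suc m" .
    qed
  qed
qed

lemma wp_bound: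
  assumes p: "p > 0"
  shows "\<exists>B. \<forall>w\<ge>1. \<bar>w powr p * fp p w\<bar> \<le> B"
proof -
  define m where "m = nat \<lceil>p + 1\<rceil>"
  have m1: "real m \<ge> p + 1" "real m < p + 2" using p unfolding m_def by linarith+
  obtain D where D: "\<forall>w\<ge>1. \<bar>fp (p + 2) w\<bar> \<le> D / w ^ m \<and> \<bar>Cf (p + 2) w\<bar> \<le> D / w ^ m"
    using decay[of m] m1 by blast
  have D0: "D \<ge> 0"
  proof -
    have "\<bar>fp (p + 2) 1\<bar> \<le> D" using D[rule_format, of 1] by simp
    then show ?thesis using abs_ge_zero[of "fp (p + 2) 1"] by linarith
  qed
  define g where "g w = w powr p * fp p w" for w
  define g' where "g' w = w powr (p - 1) * (2 * fp (p + 2) w)" for w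
  have dg: "(g has_real_derivative g' w) (at w)" if w: "w > 0" for w
  proof -
    have ps: "(p + 1 - 1) * fp (p + 1 - 1) w - 2 * fp (p + 1 + 1) w + w * Cf (p + 1) w = 0"
      by (rule parts_sin) (use p in simp)
    have "(g has_real_derivative p * w powr (p - 1) * fp p w + w powr p * Cf (p + 1) w) (at w)"
      unfolding g_def[abs_def]
      by (rule derivative_eq_intros has_real_derivative_powr fp_deriv[OF p] w refl | simp)+
    moreover have "p * w powr (p - 1) * fp p w + w powr p * Cf (p + 1) w = g' w"
    proof -
      have e: "w powr p = w * w powr (p - 1)" using powr_x1'[OF w, of p] by simp
      have e2: "2 * fp (p + 2) w = p * fp p w + w * Cf (p + 1) w" using ps by (simp add: field_simps)
      show ?thesis unfolding g'_def e2 e by (simp add: algebra_simps)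
    qed
    ultimately show ?thesis by (rule DERIV_cong)
  qed
  have g'b: "\<bar>g' w\<bar> \<le> 2 * D / w\<^sup>2" if w: "w \<ge> 1" for w
  proof -
    have wp: "w > 0" using w by simp
    have "\<bar>g' w\<bar> = 2 * (w powr (p - 1) * \<bar>fp (p + 2) w\<bar>)" by (simp add: g'_def abs_mult)
    also have "\<dots> \<le> 2 * (w powr (p - 1) * (D / w ^ m))"
      using D w by (intro mult_left_mono) auto
    also have "w powr (p - 1) * (D / w ^ m) = D * w powr (p - 1 - real m)"
      using wp by (simp add: powr_diff powr_realpow)
    also have "\<dots> \<le> D * w powr (-2)"
      using m1 w D0 by (intro mult_left_mono powr_mono) auto
    also have "w powr (-2) = 1 / w\<^sup>2"
      using wp by (simp add: powr_minus_divide powr_realpow[of w 2, simplified])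
    finally show ?thesis by simp
  qed
  show ?thesis
  proof (intro exI[of _ "\<bar>g 1\<bar> + 2 * D"] allI impI)
    fix w :: real assume w: "w \<ge> 1"
    have up: "g w + 2 * D / w \<le> g 1 + 2 * D / 1"
    proof (rule DERIV_nonpos_imp_nonincreasing[OF w, of "\<lambda>w. g w + 2 * D / w"])
      fix x assume x: "1 \<le> x" "x \<le> w"
      have dgx: "(g has_real_derivative g' x) (at x)" by (rule dg) (use x in simp)
      have dinv: "((\<lambda>w. 2 * D / w) has_real_derivative 2 * D * (- 1 / x\<^sup>2)) (at x)"
      proof -
        have "((\<lambda>w. 2 * D * inverse w) has_real_derivative 2 * D * (- (inverse x ^ Suc (Suc 0)))) (at x)"
          by (rule DERIV_cmult[OF DERIV_inverse]) (use x in auto)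
        then show ?thesis by (simp add: divide_inverse power2_eq_square)
      qed
      have "((\<lambda>w. g w + 2 * D / w) has_real_derivative g' x + 2 * D * (- 1 / x\<^sup>2)) (at x)"
        using DERIV_add[OF dgx dinv] by simp
      moreover have "g' x + 2 * D * (- 1 / x\<^sup>2) \<le> 0" using g'b[of x] x by auto
      ultimately show "\<exists>y. ((\<lambda>w. g w + 2 * D / w) has_real_derivative y) (at x) \<and> y \<le> 0" by blast
    qed
    have lo: "g 1 - 2 * D / 1 \<le> g w - 2 * D / w"
    proof (rule DERIV_nonneg_imp_nondecreasing[OF w, of "\<lambda>w. g w - 2 * D / w"])
      fix x assume x: "1 \<le> x" "x \<le> w"
      have dgx: "(g has_real_derivative g' x) (at x)" by (rule dg) (use x in simp)
      have dinv: "((\<lambda>w. 2 * D / w) has_real_derivative 2 * D * (- 1 / x\<^sup>2)) (at x)"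
      proof -
        have "((\<lambda>w. 2 * D * inverse w) has_real_derivative 2 * D * (- (inverse x ^ Suc (Suc 0)))) (at x)"
          by (rule DERIV_cmult[OF DERIV_inverse]) (use x in auto)
        then show ?thesis by (simp add: divide_inverse power2_eq_square)
      qed
      have "((\<lambda>w. g w - 2 * D / w) has_real_derivative g' x - 2 * D * (- 1 / x\<^sup>2)) (at x)"
        using DERIV_diff[OF dgx dinv] by simp
      moreover have "g' x - 2 * D * (- 1 / x\<^sup>2) \<ge> 0" using g'b[of x] x by auto
      ultimately show "\<exists>y. ((\<lambda>w. g w - 2 * D / w) has_real_derivative y) (at x) \<and> y \<ge> 0" by blast
    qed
    have "2 * D / w \<ge> 0" using D0 w by simp
    moreover have "g 1 \<le> \<bar>g 1\<bar>" "- \<bar>g 1\<bar> \<le> g 1" by auto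
    ultimately have "g w \<le> \<bar>g 1\<bar> + 2 * D" "- (\<bar>g 1\<bar> + 2 * D) \<le> g w" using up lo by linarith+
    then show "\<bar>w powr p * fp p w\<bar> \<le> \<bar>g 1\<bar> + 2 * D" by (simp add: g_def abs_le_iff)
  qed
qed


lemma lim_wfp:
  assumes p: "p > 0" and n: "real n < p"
  shows "((\<lambda>w. w ^ n * fp p w) \<longlongrightarrow> 0) at_top"
proof -
  obtain B where B: "\<forall>w\<ge>1. \<bar>w powr p * fp p w\<bar> \<le> B" using wp_bound[OF p] by blast
  show ?thesis
  proof (rule Lim_null_comparison)
    show "\<forall>\<^sub>F w in at_top. norm (w ^ n * fp p w) \<le> B * w powr (real n - p)"
      using eventually_ge_at_top[of "1::real"]
    proof eventually_elim
      case (elim w)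
      then have wp: "w > 0" by simp
      have "norm (w ^ n * fp p w) = w powr (real n - p) * \<bar>w powr p * fp p w\<bar>"
        using wp by (simp add: abs_mult powr_diff powr_realpow field_simps)
      also have "\<dots> \<le> w powr (real n - p) * B" using B elim by (intro mult_left_mono) auto
      finally show ?case by (simp add: mult.commute)
    qed
    have "((\<lambda>w. w powr (real n - p)) \<longlongrightarrow> 0) at_top"
      by (rule tendsto_neg_powr) (use n in \<open>auto intro: filterlim_ident\<close>)
    then show "((\<lambda>w. B * w powr (real n - p)) \<longlongrightarrow> 0) at_top"
      using tendsto_mult_right_zero by blast
  qed
qed

lemma even_bounds:
  "\<exists>A\<ge>0. \<forall>w\<ge>1. \<bar>exp (w\<^sup>2 / 4) * fp (2 * real k + 2) w\<bar> \<le> A * w ^ (2 * k + 1)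
              \<and> \<bar>exp (w\<^sup>2 / 4) * Cf (2 * real k + 3) w\<bar> \<le> A * w ^ (2 * k + 2)"
proof (induction k)
  case 0
  define c where "c = Cf 1 0"
  have c0: "c > 0" using Mf_pos[of 1] by (simp add: c_def Cf_zero)
  show ?case
  proof (intro exI[of _ c] conjI allI impI)
    show "c \<ge> 0" using c0 by simp
    fix w :: real assume w: "w \<ge> 1"
    have e2: "exp (w\<^sup>2 / 4) * fp 2 w = w / 2 * c"
      by (simp add: fp2_formula c_def exp_minus field_simps)
    have pc: "(2 - 1) * Cf (2 - 1) w - 2 * Cf (2 + 1) w - w * fp 2 w = 0" by (rule parts_cos) simp
    have e3: "exp (w\<^sup>2 / 4) * Cf 3 w = c * (1 - w\<^sup>2 / 2) / 2"
    proof -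
      have "Cf 3 w = (Cf 1 w - w * fp 2 w) / 2" using pc by simp
      then show ?thesis
        by (simp add: fp2_formula Cf1_formula[of w] c_def exp_minus field_simps power2_eq_square)
    qed
    show "\<bar>exp (w\<^sup>2 / 4) * fp (2 * real 0 + 2) w\<bar> \<le> c * w ^ (2 * 0 + 1)"
    proof -
      have "\<bar>exp (w\<^sup>2 / 4) * fp 2 w\<bar> = w / 2 * c" unfolding e2 using c0 w by simp
      also have "\<dots> \<le> c * w" using c0 w by simp
      finally show ?thesis by simp
    qed
    have "\<bar>c * (1 - w\<^sup>2 / 2) / 2\<bar> \<le> c * w\<^sup>2"
    proof -
      have w2: "w\<^sup>2 \<ge> 1" using w by (simp add: one_le_power)
      have "\<bar>1 - w\<^sup>2 / 2\<bar> \<le> 2 * w\<^sup>2" using w2 by (simp add: abs_le_iff)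
      then have "c * \<bar>1 - w\<^sup>2 / 2\<bar> \<le> c * (2 * w\<^sup>2)" using c0 by (intro mult_left_mono) auto
      then show ?thesis using c0 by (simp add: abs_mult)
    qed
    then have "\<bar>exp (w\<^sup>2 / 4) * Cf 3 w\<bar> \<le> c * w\<^sup>2" unfolding e3 .
    then show "\<bar>exp (w\<^sup>2 / 4) * Cf (2 * real 0 + 3) w\<bar> \<le> c * w ^ (2 * 0 + 2)"
      by (simp add: power2_eq_square)
  qed
next
  case (Suc k)
  obtain A where A0: "A \<ge> 0" and A: "\<forall>w\<ge>1. \<bar>exp (w\<^sup>2 / 4) * fp (2 * real k + 2) w\<bar> \<le> A * w ^ (2 * k + 1)
              \<and> \<bar>exp (w\<^sup>2 / 4) * Cf (2 * real k + 3) w\<bar> \<le> A * w ^ (2 * k + 2)"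
    using Suc.IH by blast
  define q where "q = 2 * real k + 2"
  have q0: "q > 0" by (simp add: q_def)
  define A' where "A' = (q + 1) * A"
  show ?case
  proof (intro exI[of _ A'] conjI allI impI)
    show "A' \<ge> 0" using A0 q0 by (simp add: A'_def)
    fix w :: real assume w: "w \<ge> 1"
    let ?E = "exp (w\<^sup>2 / 4)"
    let ?a = "?E * fp q w" and ?b = "?E * Cf (q + 1) w"
    have ha: "\<bar>?a\<bar> \<le> A * w ^ (2 * k + 1)" and hb: "\<bar>?b\<bar> \<le> A * w ^ (2 * k + 2)"
      using A w by (auto simp: q_def add.assoc)
    have ps: "(q + 1 - 1) * fp (q + 1 - 1) w - 2 * fp (q + 1 + 1) w + w * Cf (q + 1) w = 0"
      by (rule parts_sin) (use q0 in simp)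
    have pc: "(q + 2 - 1) * Cf (q + 2 - 1) w - 2 * Cf (q + 2 + 1) w - w * fp (q + 2) w = 0"
      by (rule parts_cos) (use q0 in simp)
    have ea: "?E * fp (q + 2) w = (q * ?a + w * ?b) / 2"
    proof -
      have e: "fp (q + 2) w = (q * fp q w + w * Cf (q + 1) w) / 2" using ps by (simp add: field_simps add.assoc)
      show ?thesis by (subst e) (simp add: field_simps)
    qed
    have eb: "?E * Cf (q + 3) w = ((q + 1) * ?b - w * (?E * fp (q + 2) w)) / 2"
    proof -
      have e: "Cf (q + 3) w = ((q + 1) * Cf (q + 1) w - w * fp (q + 2) w) / 2" using pc by (simp add: field_simps add.assoc)
      show ?thesis by (subst e) (simp add: field_simps)
    qed
    have wk1: "w ^ (2 * k + 1) \<le> w ^ (2 * k + 3)" by (rule power_increasing) (use w in auto)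
    have wk2: "w ^ (2 * k + 2) \<le> w ^ (2 * k + 4)" by (rule power_increasing) (use w in auto)
    note wk = wk1 wk2
    have n3: "2 * k + 3 = Suc (2 * k + 2)" and n4: "2 * k + 4 = Suc (2 * k + 3)" by simp_all
    have w1: "w * w ^ (2 * k + 2) = w ^ (2 * k + 3)" "w * w ^ (2 * k + 3) = w ^ (2 * k + 4)"
      by (simp only: n3 n4 power_Suc)+
    have bound_a: "\<bar>?E * fp (q + 2) w\<bar> \<le> (q + 1) * A / 2 * w ^ (2 * k + 3)"
    proof -
      have "\<bar>?E * fp (q + 2) w\<bar> \<le> (q * \<bar>?a\<bar> + w * \<bar>?b\<bar>) / 2"
        unfolding ea using q0 w by (simp add: abs_mult divide_right_mono order.trans[OF abs_triangle_ineq])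
      also have "\<dots> \<le> (q * (A * w ^ (2 * k + 3)) + w * (A * w ^ (2 * k + 2))) / 2"
        using q0 w ha hb wk A0 by (intro divide_right_mono add_mono mult_left_mono order.trans[OF ha]) auto
      also have "\<dots> = (q + 1) * A / 2 * w ^ (2 * k + 3)" using w1 by (simp add: field_simps)
      finally show ?thesis .
    qed
    have "\<bar>?E * Cf (q + 3) w\<bar> \<le> ((q + 1) * \<bar>?b\<bar> + w * \<bar>?E * fp (q + 2) w\<bar>) / 2"
      unfolding eb using q0 w by (simp add: abs_mult divide_right_mono order.trans[OF abs_triangle_ineq4])
    also have "\<dots> \<le> ((q + 1) * (A * w ^ (2 * k + 4)) + w * ((q + 1) * A / 2 * w ^ (2 * k + 3))) / 2"
      using q0 w hb wk A0 bound_a by (intro divide_right_mono add_mono mult_left_mono order.trans[OF hb]) auto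
    also have "\<dots> = (3 / 4) * A' * w ^ (2 * k + 4)" using w1 by (simp add: A'_def field_simps)
    also have "\<dots> \<le> A' * w ^ (2 * k + 4)"
      using A0 q0 w by (intro mult_right_mono) (auto simp: A'_def)
    finally have "\<bar>?E * Cf (q + 3) w\<bar> \<le> A' * w ^ (2 * k + 4)" .
    moreover have "2 * real (Suc k) + 3 = q + 3" "2 * Suc k + 2 = 2 * k + 4" by (simp_all add: q_def)
    ultimately show "\<bar>?E * Cf (2 * real (Suc k) + 3) w\<bar> \<le> A' * w ^ (2 * Suc k + 2)"
      by (simp only:)
    have "(q + 1) * A / 2 * w ^ (2 * k + 3) \<le> A' * w ^ (2 * k + 3)"
      using A0 q0 w by (intro mult_right_mono) (auto simp: A'_def)
    then have "\<bar>?E * fp (q + 2) w\<bar> \<le> A' * w ^ (2 * k + 3)" using bound_a by linarith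
    moreover have "2 * real (Suc k) + 2 = q + 2" "2 * Suc k + 1 = 2 * k + 3" by (simp_all add: q_def)
    ultimately show "\<bar>?E * fp (2 * real (Suc k) + 2) w\<bar> \<le> A' * w ^ (2 * Suc k + 1)"
      by (simp only:)
  qed
qed


lemma W_lim:
  assumes kp: "2 * real k + 2 < p"
  shows "((\<lambda>w. exp (w\<^sup>2 / 4) * (fp (2 * real k + 2) w * Cf (p + 1) w - Cf (2 * real k + 2 + 1) w * fp p w)) \<longlongrightarrow> 0) at_top"
proof -
  have p: "p > 0" using kp by (smt (verit) of_nat_0_le_iff)
  obtain A where A0: "A \<ge> 0" and A: "\<forall>w\<ge>1. \<bar>exp (w\<^sup>2 / 4) * fp (2 * real k + 2) w\<bar> \<le> A * w ^ (2 * k + 1)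
              \<and> \<bar>exp (w\<^sup>2 / 4) * Cf (2 * real k + 3) w\<bar> \<le> A * w ^ (2 * k + 2)"
    using even_bounds[of k] by blast
  have m: "real (2 * k + 3) < p + 1" using kp by simp
  obtain D where D: "\<forall>w\<ge>1. \<bar>fp (p + 1) w\<bar> \<le> D / w ^ (2 * k + 3) \<and> \<bar>Cf (p + 1) w\<bar> \<le> D / w ^ (2 * k + 3)"
    using decay[of "2 * k + 3"] m by blast
  show ?thesis
  proof (rule Lim_null_comparison)
    show "\<forall>\<^sub>F w in at_top. norm (exp (w\<^sup>2 / 4) * (fp (2 * real k + 2) w * Cf (p + 1) w - Cf (2 * real k + 2 + 1) w * fp p w))
           \<le> A * D / w\<^sup>2 + A * \<bar>w ^ (2 * k + 2) * fp p w\<bar>"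
      using eventually_ge_at_top[of "1::real"]
    proof eventually_elim
      case (elim w)
      let ?E = "exp (w\<^sup>2 / 4)"
      have wp: "w > 0" using elim by simp
      have e3: "2 * real k + 2 + 1 = 2 * real k + 3" by simp
      have h1: "\<bar>?E * fp (2 * real k + 2) w\<bar> \<le> A * w ^ (2 * k + 1)" using A elim by blast
      have h2: "\<bar>?E * Cf (2 * real k + 3) w\<bar> \<le> A * w ^ (2 * k + 2)" using A elim by blast
      have h3: "\<bar>Cf (p + 1) w\<bar> \<le> D / w ^ (2 * k + 3)" using D elim by blast
      have "norm (?E * (fp (2 * real k + 2) w * Cf (p + 1) w - Cf (2 * real k + 2 + 1) w * fp p w))
          = \<bar>(?E * fp (2 * real k + 2) w) * Cf (p + 1) w - (?E * Cf (2 * real k + 3) w) * fp p w\<bar>"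
        unfolding e3 by (simp add: algebra_simps)
      also have "\<dots> \<le> \<bar>?E * fp (2 * real k + 2) w\<bar> * \<bar>Cf (p + 1) w\<bar> + \<bar>?E * Cf (2 * real k + 3) w\<bar> * \<bar>fp p w\<bar>"
        by (metis abs_mult abs_triangle_ineq4)
      also have "\<dots> \<le> (A * w ^ (2 * k + 1)) * (D / w ^ (2 * k + 3)) + (A * w ^ (2 * k + 2)) * \<bar>fp p w\<bar>"
        by (intro add_mono mult_mono h1 h2 h3) (use A0 wp in auto)
      also have "(A * w ^ (2 * k + 1)) * (D / w ^ (2 * k + 3)) = A * D / w\<^sup>2"
      proof -
        have n: "2 * k + 3 = (2 * k + 1) + 2" by simp
        have "w ^ (2 * k + 3) = w ^ (2 * k + 1) * w\<^sup>2" by (simp only: n power_add)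
        then show ?thesis using wp by (simp add: field_simps)
      qed
      also have "(A * w ^ (2 * k + 2)) * \<bar>fp p w\<bar> = A * \<bar>w ^ (2 * k + 2) * fp p w\<bar>"
        using wp by (simp add: abs_mult)
      finally show ?case .
    qed
    have l1: "((\<lambda>w::real. A * D / w\<^sup>2) \<longlongrightarrow> 0) at_top" by real_asymp
    have l2: "((\<lambda>w. w ^ (2 * k + 2) * fp p w) \<longlongrightarrow> 0) at_top" by (rule lim_wfp[OF p]) (use kp in simp)
    have l3: "((\<lambda>w. A * \<bar>w ^ (2 * k + 2) * fp p w\<bar>) \<longlongrightarrow> 0) at_top"
      using tendsto_mult_right_zero[OF tendsto_rabs_zero[OF l2]] by simp
    show "((\<lambda>w. A * D / w\<^sup>2 + A * \<bar>w ^ (2 * k + 2) * fp p w\<bar>) \<longlongrightarrow> 0) at_top"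
      using tendsto_add[OF l1 l3] by simp
  qed
qed

lemma lb:
  assumes "2 * real k < p" "p \<le> 2 * real k + 2"
  shows "\<exists>F. finite F \<and> F \<subseteq> {w. 0 < w \<and> fp p w = 0} \<and> card F = k"
  using assms
proof (induction k arbitrary: p)
  case 0
  then show ?case by (intro exI[of _ "{}"]) auto
next
  case (Suc k)
  define q where "q = 2 * real k + 2"
  have q0: "q > 0" and qp: "q < p" and p0: "p > 0" using Suc.prems by (auto simp: q_def)
  define Z where "Z = {w. 0 < w \<and> fp q w = 0}"
  obtain F0 where F0: "finite F0" "F0 \<subseteq> Z" "card F0 = k"
    using Suc.IH[of q] by (auto simp: q_def Z_def)
  have ubq: "card G \<le> k" if "finite G" "G \<subseteq> Z" for G
    by (rule ub[of k q]) (use that in \<open>auto simp: q_def Z_def\<close>)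
  have finZ: "finite Z"
  proof (rule ccontr)
    assume "infinite Z"
    then obtain G where "G \<subseteq> Z" "finite G" "card G = Suc k" using infinite_arbitrarily_large by blast
    then show False using ubq by fastforce
  qed
  have cardZ: "card Z = k" using ubq[OF finZ] card_mono[OF finZ F0(2)] F0(3) by simp
  define Z' where "Z' = insert 0 Z"
  have finZ': "finite Z'" using finZ by (simp add: Z'_def)
  have cardZ': "card Z' = Suc k" using finZ cardZ by (simp add: Z'_def Z_def)
  have sq: "sol q (fp q) (Cf (q + 1))" by (rule sol_fp[OF q0])
  have sp: "sol p (fp p) (Cf (p + 1))" by (rule sol_fp[OF p0])
  have Z'0: "\<zeta> \<ge> 0" "fp q \<zeta> = 0" if "\<zeta> \<in> Z'" for \<zeta> using that by (auto simp: Z'_def Z_def)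
  have key: "\<exists>w. \<zeta> < w \<and> fp p w = 0 \<and> (\<forall>z\<in>Z'. \<zeta> < z \<longrightarrow> w < z)" if \<zeta>: "\<zeta> \<in> Z'" for \<zeta>
  proof (cases "{z \<in> Z'. \<zeta> < z} = {}")
    case False
    define b where "b = Min {z \<in> Z'. \<zeta> < z}"
    have finU: "finite {z \<in> Z'. \<zeta> < z}" using finZ' by simp
    have bU: "b \<in> {z \<in> Z'. \<zeta> < z}" using Min_in[OF finU False] by (simp add: b_def)
    have bmin: "b \<le> z" if "z \<in> Z'" "\<zeta> < z" for z using Min_le[OF finU] that by (simp add: b_def)
    have nz: "\<forall>w\<in>{\<zeta><..<b}. fp q w \<noteq> 0"
    proof (intro ballI notI)
      fix w assume w: "w \<in> {\<zeta><..<b}" "fp q w = 0"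
      then have "w \<in> Z'" using Z'0[OF \<zeta>] by (auto simp: Z'_def Z_def)
      then show False using bmin[of w] w by auto
    qed
    obtain w where w: "w \<in> {\<zeta><..<b}" "fp p w = 0"
      using sturm_interval[OF _ qp sq sp Z'0(2)[OF \<zeta>] Z'0(2)[of b] nz] bU by auto
    show ?thesis
      using w bmin by (intro exI[of _ w]) force
  next
    case True
    have nz: "\<forall>w>\<zeta>. fp q w \<noteq> 0"
    proof (intro allI impI notI)
      fix w assume w: "\<zeta> < w" "fp q w = 0"
      then have "w \<in> Z'" using Z'0[OF \<zeta>] by (auto simp: Z'_def Z_def)
      then show False using True w by auto
    qed
    have lim: "((\<lambda>w. exp (w\<^sup>2 / 4) * (fp q w * Cf (p + 1) w - Cf (q + 1) w * fp p w)) \<longlongrightarrow> 0) at_top"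
      unfolding q_def by (rule W_lim) (use qp in \<open>simp add: q_def\<close>)
    obtain w where "w > \<zeta>" "fp p w = 0" using sturm_half[OF qp sq sp Z'0(2)[OF \<zeta>] nz lim] by auto
    then show ?thesis using True by (intro exI[of _ w]) auto
  qed
  then obtain \<phi> where \<phi>: "\<forall>\<zeta>\<in>Z'. \<zeta> < \<phi> \<zeta> \<and> fp p (\<phi> \<zeta>) = 0 \<and> (\<forall>z\<in>Z'. \<zeta> < z \<longrightarrow> \<phi> \<zeta> < z)"
    by metis
  have inj: "inj_on \<phi> Z'"
  proof (rule inj_onI)
    fix x y assume xy: "x \<in> Z'" "y \<in> Z'" "\<phi> x = \<phi> y"
    show "x = y"
    proof (rule ccontr)
      assume "x \<noteq> y"
      then consider "x < y" | "y < x" by linarith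
      then show False
      proof cases
        case 1
        then have "\<phi> x < y" "y < \<phi> y" using \<phi> xy by auto
        then show False using xy by simp
      next
        case 2
        then have "\<phi> y < x" "x < \<phi> x" using \<phi> xy by auto
        then show False using xy by simp
      qed
    qed
  qed
  show ?case
  proof (intro exI[of _ "\<phi> ` Z'"] conjI)
    show "finite (\<phi> ` Z')" using finZ' by simp
    show "\<phi> ` Z' \<subseteq> {w. 0 < w \<and> fp p w = 0}"
      using \<phi> Z'0 by (force)
    show "card (\<phi> ` Z') = Suc k" using card_image[OF inj] cardZ' by simp
  qed
qed

theorem lemma16_aux:
  fixes p :: real and k :: nat
  assumes "2 * real k < p" and "p \<le> 2 * real k + 2"
  shows "finite {w::real. 0 < w \<and> fp p w = 0} \<and> card {w::real. 0 < w \<and> fp p w = 0} = k"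
proof -
  let ?Z = "{w::real. 0 < w \<and> fp p w = 0}"
  have finZ: "finite ?Z"
  proof (rule ccontr)
    assume "infinite ?Z"
    then obtain G where "G \<subseteq> ?Z" "finite G" "card G = Suc k" using infinite_arbitrarily_large by blast
    then show False using ub[OF assms, of G] by simp
  qed
  obtain F where F: "finite F" "F \<subseteq> ?Z" "card F = k" using lb[OF assms] by blast
  have "card ?Z \<le> k" by (rule ub[OF assms finZ]) simp
  moreover have "k \<le> card ?Z" using card_mono[OF finZ F(2)] F(3) by simp
  ultimately show ?thesis using finZ by simp
qed


theorem lemma16:
  fixes p :: real and k :: nat
  assumes "2 * real k < p" and "p \<le> 2 * real k + 2"
  shows "finite {w::real. 0 < w \<and> fp p w = 0} \<and> card {w::real. 0 < w \<and> fp p w = 0} = k"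
  using lemma16_aux[OF assms] .

end
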